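(* In the setting where delays are available at action time, the expected regret of Skipper$(\beta,\mathrm{DEW}(\eta,\beta))$ tuned by the scheme Doubling (see context) satisfies, for every $T$ and without prior knowledge of $T$ or $D$, $$\bar{\mathcal R}_T\le 15\min_{\beta>0}\left\{|S_\beta|+4e\beta\ln K+\frac{KT+D_\beta}{4e\beta}\right\}+10e^2K\ln K+5.$$
   Context: Setting: fix integers $K\ge 2$, $T\ge 1$, $[K]=\{1,\dots,K\}$. An oblivious adversary fixes in advance losses $\ell_t^a\in[0,1]$ and nonnegative integer delays $d_t$. In each round $t$ the delay $d_t$ is revealed to the learner at the beginning of the round (delay available at action time); the learner then picks (possibly at random) $A_t\in[K]$, suffers $\ell_t^{A_t}$, and at the end of round $t$ observes the pairs $(s,\ell_s^{A_s})$ for all $s\le t$ with $s+d_s=t$. Expected regret: $\bar{\mathcal R}_T=\mathbb E[\sum_{t=1}^T\ell_t^{A_t}]-\min_a\sum_{t=1}^T\ell_t^a$. $D=\sum_{t=1}^Td_t$, $S_\beta=\{t\in[T]:d_t\ge\beta\}$, $D_\beta=\sum_{t\in[T]\setminus S_\beta}d_t$. Algorithm DEW with inputs $\eta>0$ and $d_{\max}$: $\eta'=\min\{\eta,(4e\,d_{\max})^{-1}\}$, $w_0^a=1$; in round $t$ play $A_t\sim p_t$ with $p_t^a=w_{t-1}^a/\sum_b w_{t-1}^b$; at the end of the round, for each received pair $(s,\ell_s^{A_s})$ form $\hat\ell_s^a=\ell_s^a\mathbb 1(a=A_s)/p_s^a$ and update $w_t^a=w_{t-1}^a\exp(-\eta'\sum_s\hat\ell_s^a)$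 (sum over pairs received in round $t$). Skipper$(\beta,\mathcal A)$ plays the actions of the base algorithm $\mathcal A$ and forwards to $\mathcal A$ only the pairs $(s,\ell_s^{A_s})$ with $d_s<\beta$. Skipper$(\beta,\mathrm{DEW}(\eta,\beta))$ uses DEW with learning rate $\eta$ and $d_{\max}=\beta$. Doubling: rounds are partitioned into consecutive epochs indexed by $m$, with $\omega_m=2^m$, $\beta_m=\sqrt{\omega_m}/(4e\ln K)$ and $\eta_m=1/(4e\beta_m)$; in each epoch a fresh copy of Skipper$(\beta_m,\mathrm{DEW}(\eta_m,\beta_m))$ is run. For epoch $m$ let $\sigma(m)$ be its number of rounds, $S^m_\beta$ the set of its rounds with $d_t\ge\beta$, and $D^m_\beta$ the sum of $d_t$ over its rounds with $d_t<\beta$. At the beginning of each round $t$, after $d_t$ is revealed, the algorithm stays in the current epoch $m$ if, with round $t$ included in epoch $m$, $$\max\Big\{|S^m_{\beta_m}|^2,\ \Big(\tfrac{eK\sigma(m)}{2}+D^m_{\beta_m}\Big)\ln K\Big\}\le\omega_m;$$ otherwise a new epoch (with a larger index) is started at round $t$, before $A_t$ is selected. *)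

theory Defs
  imports Complex_Main
begin

text \<open>Rounds are indexed 1,2,...; actions are 1..K.  The losses are
  l :: nat => nat => real (l t a = loss of action a in round t) and the delays
  d :: nat => nat.  Both are fixed in advance (oblivious adversary).\<close>

definition omega :: "nat \<Rightarrow> real" where
  "omega m = 2 ^ m"

definition beta :: "nat \<Rightarrow> nat \<Rightarrow> real" where
  "beta K m = sqrt (omega m) / (4 * exp 1 * ln (real K))"

definition eta :: "nat \<Rightarrow> nat \<Rightarrow> real" where
  "eta K m = 1 / (4 * exp 1 * beta K m)"

text \<open>Stay condition of Doubling: epoch with index m consisting of the rounds r..t.\<close>
definition stay_cond :: "nat \<Rightarrow> (nat \<Rightarrow> nat) \<Rightarrow> nat \<Rightarrow> nat \<Rightarrow> nat \<Rightarrow> bool" where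
  "stay_cond K d m r t \<longleftrightarrow>
     max ((real (card {s \<in> {r..t}. beta K m \<le> real (d s)})) ^ 2)
         ((exp 1 * real K * real (t + 1 - r) / 2
            + (\<Sum>s\<in>{s \<in> {r..t}. real (d s) < beta K m}. real (d s))) * ln (real K))
       \<le> omega m"

text \<open>epoch K d t = (m, r): the round t (t >= 1) belongs to the epoch with index m,
  which started at round r.  The first epoch starts at round 1 (with the least index
  for which the stay condition holds; starting from index 0 this is what the
  restart rule produces, as index 0 always fails for K >= 2).  The value at t = 0
  is a dummy.\<close>
fun epoch :: "nat \<Rightarrow> (nat \<Rightarrow> nat) \<Rightarrow> nat \<Rightarrow> nat \<times> nat" where
  "epoch K d 0 = (0, 1)"
| "epoch K d (Suc t) =
     (if t = 0 then (LEAST m. stay_cond K d m 1 1, 1)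
      else (let (m, r) = epoch K d t in
            if stay_cond K d m r (Suc t) then (m, r)
            else (LEAST m'. m < m' \<and> stay_cond K d m' (Suc t) (Suc t), Suc t)))"

text \<open>Feedback forwarded by Skipper to the current DEW copy before round t = length h + 1,
  where h = [A_1, ..., A_{t-1}] is the history of played actions: pairs of rounds s
  of the current epoch (s >= r), with d_s < beta_m, whose feedback arrived at the end of
  some round s + d_s <= t - 1.\<close>
definition received :: "nat \<Rightarrow> (nat \<Rightarrow> nat) \<Rightarrow> nat list \<Rightarrow> nat set" where
  "received K d h =
     (let (m, r) = epoch K d (length h + 1)
      in {s. 1 \<le> s \<and> r \<le> s \<and> s + d s \<le> length h \<and> real (d s) < beta K m})"

text \<open>Effective DEW learning rate eta' = min(eta, 1/(4 e d_max)) with d_max = beta.\<close>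
definition eta_eff :: "nat \<Rightarrow> (nat \<Rightarrow> nat) \<Rightarrow> nat list \<Rightarrow> real" where
  "eta_eff K d h =
     (let m = fst (epoch K d (length h + 1))
      in min (eta K m) (1 / (4 * exp 1 * beta K m)))"

lemma received_lt: "s \<in> received K d h \<Longrightarrow> length (take (s - 1) h) < length h"
  unfolding received_def by (auto split: prod.splits)

lemma received_finite: "finite (received K d h)"
  unfolding received_def by (auto split: prod.splits intro: finite_subset[of _ "{..length h}"])

text \<open>pdist K d l h a = probability p_t^a that the algorithm plays a in round
  t = length h + 1, given the history h = [A_1, ..., A_{t-1}].\<close>
function pdist :: "nat \<Rightarrow> (nat \<Rightarrow> nat) \<Rightarrow> (nat \<Rightarrow> nat \<Rightarrow> real) \<Rightarrow> nat list \<Rightarrow> nat \<Rightarrow> real" where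
  "pdist K d l h a =
     (let w = (\<lambda>b. exp (- eta_eff K d h *
                  (\<Sum>s\<in>received K d h.
                     (if b = h ! (s - 1) then l s b / pdist K d l (take (s - 1) h) b else 0))))
      in w a / (\<Sum>b\<in>{1..K}. w b))"
  by pat_completeness auto
termination
  by (relation "measure (\<lambda>(K, d, l, h, a). length h)") (auto dest: received_lt)

definition exp_loss :: "nat \<Rightarrow> (nat \<Rightarrow> nat) \<Rightarrow> (nat \<Rightarrow> nat \<Rightarrow> real) \<Rightarrow> nat \<Rightarrow> real" where
  "exp_loss K d l T =
     (\<Sum>xs\<in>{xs. length xs = T \<and> set xs \<subseteq> {1..K}}.
        (\<Prod>i<T. pdist K d l (take i xs) (xs ! i)) * (\<Sum>i<T. l (i + 1) (xs ! i)))"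

definition exp_regret :: "nat \<Rightarrow> (nat \<Rightarrow> nat) \<Rightarrow> (nat \<Rightarrow> nat \<Rightarrow> real) \<Rightarrow> nat \<Rightarrow> real" where
  "exp_regret K d l T = exp_loss K d l T - (MIN a\<in>{1..K}. \<Sum>t=1..T. l t a)"

definition S_set :: "(nat \<Rightarrow> nat) \<Rightarrow> nat \<Rightarrow> real \<Rightarrow> nat set" where
  "S_set d T \<beta> = {t \<in> {1..T}. \<beta> \<le> real (d t)}"

definition D_beta :: "(nat \<Rightarrow> nat) \<Rightarrow> nat \<Rightarrow> real \<Rightarrow> real" where
  "D_beta d T \<beta> = (\<Sum>t\<in>{1..T} - S_set d T \<beta>. real (d t))"

end

theory Submission
  imports Defs
begin

declare pdist.simps[simp del]

definition Rcv :: "nat \<Rightarrow> (nat \<Rightarrow> nat) \<Rightarrow> nat \<Rightarrow> nat set" where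
  "Rcv K d n = received K d (replicate n 0)"

lemma received_Rcv: "received K d h = Rcv K d (length h)"
  unfolding Rcv_def received_def by simp

definition etaf :: "nat \<Rightarrow> (nat \<Rightarrow> nat) \<Rightarrow> nat \<Rightarrow> real" where
  "etaf K d n = eta_eff K d (replicate n 0)"

lemma eta_eff_etaf: "eta_eff K d h = etaf K d (length h)"
  unfolding etaf_def eta_eff_def by simp

lemma pdist_eq: "pdist K d l h a =
   exp (- etaf K d (length h) * (\<Sum>s\<in>Rcv K d (length h).
          (if a = h ! (s - 1) then l s a / pdist K d l (take (s - 1) h) a else 0)))
   / (\<Sum>b\<in>{1..K}. exp (- etaf K d (length h) * (\<Sum>s\<in>Rcv K d (length h).
          (if b = h ! (s - 1) then l s b / pdist K d l (take (s - 1) h) b else 0))))"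
  by (subst pdist.simps) (simp add: Let_def received_Rcv eta_eff_etaf)

lemma pdist_pos: "K \<ge> 1 \<Longrightarrow> pdist K d l h a > 0"
  apply (subst pdist_eq)
  apply (rule divide_pos_pos, simp)
  apply (rule sum_pos, auto)
  done

lemma pdist_sum: "K \<ge> 1 \<Longrightarrow> (\<Sum>a\<in>{1..K}. pdist K d l h a) = 1"
proof -
  assume K: "K \<ge> 1"
  define w where "w b = exp (- etaf K d (length h) * (\<Sum>s\<in>Rcv K d (length h).
          (if b = h ! (s - 1) then l s b / pdist K d l (take (s - 1) h) b else 0)))" for b
  have p: "pdist K d l h a = w a / sum w {1..K}" for a
    unfolding w_def by (rule pdist_eq)
  have "sum w {1..K} > 0" using K by (intro sum_pos) (auto simp: w_def)
  then show ?thesis unfolding p sum_divide_distrib[symmetric] by simp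
qed

locale dew =
  fixes K :: nat and d :: "nat \<Rightarrow> nat" and l :: "nat \<Rightarrow> nat \<Rightarrow> real"
  assumes K2: "2 \<le> K"
begin

abbreviation p where "p \<equiv> pdist K d l"

lemma K1: "1 \<le> K" using K2 by simp

lemma p_pos: "p h a > 0" using pdist_pos[OF K1] .
lemma p_sum: "(\<Sum>a\<in>{1..K}. p h a) = 1" using pdist_sum[OF K1] .
lemma p_sum'[simp]: "sum (p h) {Suc 0..K} = 1" using p_sum by simp

definition X where "X n = {xs::nat list. length xs = n \<and> set xs \<subseteq> {1..K}}"

lemma finite_X: "finite (X n)"
proof -
  have "X n \<subseteq> {xs. set xs \<subseteq> {1..K} \<and> length xs = n}" unfolding X_def by auto
  then show ?thesis using finite_lists_length_eq[of "{1..K}" n] by (auto intro: finite_subset)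
qed

lemma X_0: "X 0 = {[]}" unfolding X_def by auto

lemma X_Suc: "X (Suc n) = (\<lambda>(h,b). h @ [b]) ` (X n \<times> {1..K})"
proof (intro set_eqI iffI)
  fix xs assume a: "xs \<in> X (Suc n)"
  then have ne: "xs \<noteq> []" unfolding X_def by auto
  have e: "xs = butlast xs @ [last xs]" using ne by simp
  have "set xs \<subseteq> {1..K}" "length xs = Suc n" using a unfolding X_def by auto
  moreover have "last xs \<in> set xs" using ne by simp
  ultimately have "butlast xs \<in> X n" "last xs \<in> {1..K}"
    unfolding X_def using ne in_set_butlastD[of _ xs] by (simp add: subset_iff, blast)
  then show "xs \<in> (\<lambda>(h,b). h @ [b]) ` (X n \<times> {1..K})" using e by force
qed (auto simp: X_def)

lemma sum_X_Suc: "(\<Sum>xs\<in>X (Suc n). F xs) = (\<Sum>h\<in>X n. \<Sum>b\<in>{1..K}. F (h @ [b]))"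
proof -
  have inj: "inj_on (\<lambda>(h,b). h @ [b]) (X n \<times> {1..K})"
    by (auto simp: inj_on_def)
  show ?thesis unfolding X_Suc sum.reindex[OF inj]
    by (simp add: sum.cartesian_product split_def)
qed

definition Prp where "Prp pre h = (\<Prod>i<length h. p (pre @ take i h) (h ! i))"

lemma Prp_Nil[simp]: "Prp pre [] = 1" unfolding Prp_def by simp

lemma Prp_snoc: "Prp pre (h @ [b]) = Prp pre h * p (pre @ h) b"
  unfolding Prp_def by (simp add: nth_append)

lemma Prp_nonneg: "Prp pre h \<ge> 0"
  unfolding Prp_def by (intro prod_nonneg) (simp add: less_imp_le p_pos)

lemma Prp_sum: "(\<Sum>h\<in>X n. Prp pre h) = 1"
proof (induction n)
  case 0 show ?case by (simp add: X_0)
next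
  case (Suc n)
  have "(\<Sum>h\<in>X (Suc n). Prp pre h) = (\<Sum>h\<in>X n. Prp pre h * (\<Sum>b\<in>{1..K}. p (pre @ h) b))"
    by (simp only: sum_X_Suc Prp_snoc sum_distrib_left)
  also have "\<dots> = 1" using Suc by (simp only: p_sum mult_1_right)
  finally show ?case .
qed

definition E where "E n f = (\<Sum>xs\<in>X n. Prp [] xs * f xs)"

lemma E_const: "E n (\<lambda>_. c) = c"
  unfolding E_def by (simp add: sum_distrib_right[symmetric] Prp_sum)

lemma E_add: "E n (\<lambda>x. f x + g x) = E n f + E n g"
  unfolding E_def by (simp add: distrib_left sum.distrib)

lemma E_diff: "E n (\<lambda>x. f x - g x) = E n f - E n g"
  unfolding E_def by (simp add: right_diff_distrib sum_subtractf)

lemma E_cmult: "E n (\<lambda>x. c * f x) = c * E n f"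
  unfolding E_def by (simp add: sum_distrib_left mult.left_commute)

lemma E_sum: "finite A \<Longrightarrow> E n (\<lambda>x. \<Sum>i\<in>A. f i x) = (\<Sum>i\<in>A. E n (f i))"
  unfolding E_def by (simp add: sum_distrib_left sum.swap[of _ A])

lemma E_mono: "(\<And>x. x \<in> X n \<Longrightarrow> f x \<le> g x) \<Longrightarrow> E n f \<le> E n g"
  unfolding E_def by (intro sum_mono mult_left_mono) (auto simp: Prp_nonneg)

lemma E_cong: "(\<And>x. x \<in> X n \<Longrightarrow> f x = g x) \<Longrightarrow> E n f = E n g"
  unfolding E_def by (intro sum.cong) auto

lemma E_Suc: "E (Suc n) f = E n (\<lambda>h. \<Sum>b\<in>{1..K}. p h b * f (h @ [b]))"
  unfolding E_def by (simp add: sum_X_Suc Prp_snoc sum_distrib_left mult.assoc)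

lemma E_prefix: "n \<le> N \<Longrightarrow> E N (\<lambda>xs. g (take n xs)) = E n g"
proof (induction N)
  case 0 then show ?case by (simp add: E_def X_0)
next
  case (Suc N)
  show ?case
  proof (cases "n = Suc N")
    case True
    then show ?thesis unfolding True by (intro E_cong) (simp add: X_def)
  next
    case False
    then have nN: "n \<le> N" using Suc by simp
    have "E (Suc N) (\<lambda>xs. g (take n xs)) = E N (\<lambda>h. \<Sum>b\<in>{1..K}. p h b * g (take n h))"
      unfolding E_Suc
      by (intro E_cong sum.cong) (auto simp: X_def nN)
    also have "\<dots> = E N (\<lambda>h. g (take n h))"
      by (simp add: sum_distrib_right[symmetric] p_sum)
    finally show ?thesis using Suc nN by simp
  qed
qed

lemma E_round:
  assumes "1 \<le> t" "t \<le> N"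
  shows "E N (\<lambda>xs. G (take (t - 1) xs) (xs ! (t - 1)))
       = E (t - 1) (\<lambda>h. \<Sum>b\<in>{1..K}. p h b * G h b)"
proof -
  have "E N (\<lambda>xs. G (take (t - 1) xs) (xs ! (t - 1)))
      = E N (\<lambda>xs. (\<lambda>ys. G (take (t - 1) ys) (ys ! (t - 1))) (take t xs))"
    using assms by (intro E_cong) (auto simp: X_def)
  also have "\<dots> = E t (\<lambda>ys. G (take (t - 1) ys) (ys ! (t - 1)))"
    using E_prefix[OF assms(2), of "\<lambda>ys. G (take (t - 1) ys) (ys ! (t - 1))"] by simp
  also have "\<dots> = E (Suc (t - 1)) (\<lambda>ys. G (take (t - 1) ys) (ys ! (t - 1)))"
    using assms by simp
  also have "\<dots> = E (t - 1) (\<lambda>h. \<Sum>b\<in>{1..K}. p h b * G h b)"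
    unfolding E_Suc by (intro E_cong sum.cong) (auto simp: X_def nth_append)
  finally show ?thesis .
qed

end

lemma Rcv_facts: "s \<in> Rcv K d n \<Longrightarrow> 1 \<le> s \<and> s + d s \<le> n"
  unfolding Rcv_def received_def by (auto split: prod.splits)

lemma pdist_indep:
  assumes "length h = n" "length h' = n" "1 \<le> s"
    and "\<And>i. i < n \<Longrightarrow> i \<noteq> s - 1 \<Longrightarrow> h ! i = h' ! i"
    and "\<And>k. k \<le> n \<Longrightarrow> s \<notin> Rcv K d k"
  shows "pdist K d l h a = pdist K d l h' a"
  using assms
proof (induction n arbitrary: h h' a rule: less_induct)
  case (less n)
  have R: "s \<notin> Rcv K d n" using less.prems(5) by simp
  have key: "(if b = h ! (u - 1) then l u b / pdist K d l (take (u - 1) h) b else 0)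
           = (if b = h' ! (u - 1) then l u b / pdist K d l (take (u - 1) h') b else 0)"
    if u: "u \<in> Rcv K d n" for u b
  proof -
    from Rcv_facts[OF u] have u1: "1 \<le> u" and un: "u + d u \<le> n" by auto
    have "u \<noteq> s" using u R by auto
    then have eq: "h ! (u - 1) = h' ! (u - 1)" using u1 un less.prems(3) by (intro less.prems(4)) auto
    have pd: "pdist K d l (take (u - 1) h) b = pdist K d l (take (u - 1) h') b"
      using u1 un less.prems by (intro less.IH[of "u - 1"]) auto
    show ?thesis unfolding eq pd by (rule refl)
  qed
  show ?case
    apply (subst (1 2) pdist_eq)
    using less.prems(1,2) key by (simp cong: sum.cong)
qed

context dew
begin

lemma Prp_append: "Prp pre (h1 @ h2) = Prp pre h1 * Prp (pre @ h1) h2"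
proof (induction h2 rule: rev_induct)
  case Nil then show ?case by simp
next
  case (snoc x xs) then show ?case
    by (simp add: Prp_snoc append_assoc[symmetric] del: append_assoc)
qed

lemma sum_X_add: "(\<Sum>h\<in>X (a + b). F h) = (\<Sum>h1\<in>X a. \<Sum>h2\<in>X b. F (h1 @ h2))"
proof (induction b arbitrary: F)
  case 0 then show ?case by (simp add: X_0)
next
  case (Suc b)
  have "(\<Sum>h\<in>X (a + Suc b). F h) = (\<Sum>h\<in>X (a + b). \<Sum>c\<in>{1..K}. F (h @ [c]))"
    by (simp add: sum_X_Suc)
  also have "\<dots> = (\<Sum>h1\<in>X a. \<Sum>h2\<in>X b. \<Sum>c\<in>{1..K}. F (h1 @ h2 @ [c]))"
    using Suc[of "\<lambda>h. \<Sum>c\<in>{1..K}. F (h @ [c])"] by simp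
  also have "\<dots> = (\<Sum>h1\<in>X a. \<Sum>h2\<in>X (Suc b). F (h1 @ h2))"
    by (simp add: sum_X_Suc)
  finally show ?case .
qed

lemma X_length: "h \<in> X n \<Longrightarrow> length h = n" unfolding X_def by simp
lemma X_nth: "h \<in> X n \<Longrightarrow> i < n \<Longrightarrow> h ! i \<in> {1..K}"
  using nth_mem[of i h] unfolding X_def by blast

lemma indep_pair:
  assumes s1: "1 \<le> s" and sn: "s \<le> n"
    and nr: "\<And>k. k \<le> n \<Longrightarrow> s \<notin> Rcv K d k"
  shows "E n (\<lambda>h. p h (h ! (s - 1)) / p (take (s - 1) h) (h ! (s - 1))) = 1"
proof -
  define a where "a = s - 1"
  define b where "b = n - s"
  have n: "n = Suc (a + b)" using s1 sn unfolding a_def b_def by simp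
  have sw: "p (h1 @ [c] @ h2) x = p (h1 @ [1] @ h2) x"
    if "length h1 = a" "length h2 \<le> b" for h1 h2 c x
  proof (rule pdist_indep[OF _ _ s1])
    show "length (h1 @ [c] @ h2) = length (h1 @ [c] @ h2)" by simp
    show "length (h1 @ [1] @ h2) = length (h1 @ [c] @ h2)" by simp
    show "(h1 @ [c] @ h2) ! i = (h1 @ [1] @ h2) ! i" if "i \<noteq> s - 1" for i
      using that \<open>length h1 = a\<close> unfolding a_def
      by (cases "i < length h1") (auto simp: nth_append nth_Cons split: nat.splits)
    show "s \<notin> Rcv K d k" if "k \<le> length (h1 @ [c] @ h2)" for k
      using that \<open>length h1 = a\<close> \<open>length h2 \<le> b\<close> nr unfolding a_def b_def using s1 sn by simp
  qed
  have Prpsw: "Prp (h1 @ [c]) h2 = Prp (h1 @ [1]) h2" if "length h1 = a" "length h2 = b" for h1 h2 c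
    unfolding Prp_def using that sw[of h1 "take i h2" c for i]
    by (intro prod.cong refl) (simp)
  have "E n (\<lambda>h. p h (h ! (s - 1)) / p (take (s - 1) h) (h ! (s - 1)))
     = (\<Sum>h\<in>X (Suc (a + b)). Prp [] h * (p h (h ! a) / p (take a h) (h ! a)))"
    unfolding E_def n a_def ..
  also have "\<dots> = (\<Sum>h\<in>X (a + Suc b). Prp [] h * (p h (h ! a) / p (take a h) (h ! a)))" by simp
  also have "\<dots> = (\<Sum>h1\<in>X a. \<Sum>h2\<in>X (Suc b). Prp [] (h1 @ h2) *
            (p (h1 @ h2) ((h1 @ h2) ! a) / p (take a (h1 @ h2)) ((h1 @ h2) ! a)))"
    by (rule sum_X_add)
  also have "\<dots> = (\<Sum>h1\<in>X a. \<Sum>h2\<in>X (Suc b). Prp [] h1 * Prp h1 h2 *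
            (p (h1 @ h2) (h2 ! 0) / p h1 (h2 ! 0)))"
    by (intro sum.cong refl) (simp add: Prp_append nth_append X_length)
  also have "\<dots> = (\<Sum>h1\<in>X a. Prp [] h1 * (\<Sum>h2\<in>X b. Prp (h1 @ [1]) h2))"
  proof (intro sum.cong refl)
    fix h1 assume h1: "h1 \<in> X a"
    have "X (Suc b) = X (1 + b)" by simp
    then have "(\<Sum>h2\<in>X (Suc b). Prp [] h1 * Prp h1 h2 * (p (h1 @ h2) (h2 ! 0) / p h1 (h2 ! 0)))
       = (\<Sum>c0\<in>X 1. \<Sum>h2\<in>X b. Prp [] h1 * Prp h1 (c0 @ h2) * (p (h1 @ c0 @ h2) ((c0 @ h2) ! 0) / p h1 ((c0 @ h2) ! 0)))"
      using sum_X_add[where a=1 and b=b] by simp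
    also have "\<dots> = (\<Sum>c\<in>{1..K}. \<Sum>h2\<in>X b. Prp [] h1 * Prp h1 ([c] @ h2) * (p (h1 @ [c] @ h2) c / p h1 c))"
      by (simp add: sum_X_Suc X_0)
    also have "\<dots> = (\<Sum>c\<in>{1..K}. \<Sum>h2\<in>X b. Prp [] h1 * Prp (h1 @ [1]) h2 * p (h1 @ [1] @ h2) c)"
    proof (intro sum.cong refl)
      fix c h2 assume "h2 \<in> X b"
      then have lh: "length h2 = b" by (rule X_length)
      have "Prp h1 ([c] @ h2) = p h1 c * Prp (h1 @ [1]) h2"
        using Prp_append[of h1 "[c]" h2] Prpsw[of h1 h2 c] h1 lh
        by (simp add: X_length Prp_def)
      moreover have "p (h1 @ [c] @ h2) c = p (h1 @ [1] @ h2) c"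
        using sw[of h1 h2 c c] h1 lh by (simp add: X_length)
      ultimately show "Prp [] h1 * Prp h1 ([c] @ h2) * (p (h1 @ [c] @ h2) c / p h1 c)
          = Prp [] h1 * Prp (h1 @ [1]) h2 * p (h1 @ [1] @ h2) c"
        using p_pos[of h1 c] by (simp add: field_simps)
    qed
    also have "\<dots> = (\<Sum>h2\<in>X b. \<Sum>c\<in>{1..K}. Prp [] h1 * Prp (h1 @ [1]) h2 * p (h1 @ [1] @ h2) c)"
      by (rule sum.swap)
    also have "\<dots> = (\<Sum>h2\<in>X b. Prp [] h1 * Prp (h1 @ [1]) h2 * (\<Sum>c\<in>{1..K}. p (h1 @ [1] @ h2) c))"
      by (simp only: sum_distrib_left)
    also have "\<dots> = Prp [] h1 * (\<Sum>h2\<in>X b. Prp (h1 @ [1]) h2)"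
      by (simp only: p_sum mult_1_right sum_distrib_left)
    finally show "(\<Sum>h2\<in>X (Suc b). Prp [] h1 * Prp h1 h2 * (p (h1 @ h2) (h2 ! 0) / p h1 (h2 ! 0)))
       = Prp [] h1 * (\<Sum>h2\<in>X b. Prp (h1 @ [1]) h2)" .
  qed
  also have "\<dots> = 1" by (simp add: Prp_sum)
  finally show ?thesis .
qed

definition lhat where
  "lhat xs s b = (if b = xs ! (s - 1) then l s b / p (take (s - 1) xs) b else 0)"

lemma lhat_nonneg: "(\<And>t a. 0 \<le> l t a) \<Longrightarrow> lhat xs s b \<ge> 0"
  unfolding lhat_def using p_pos by (simp add: less_imp_le)

lemma sum_indicator_K:
  fixes f g :: "nat \<Rightarrow> real"
  assumes "c \<in> {1..K}"
  shows "(\<Sum>b\<in>{1..K}. f b * (if c = b then g b else 0)) = f c * g c"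
proof -
  have "(\<Sum>b\<in>{1..K}. f b * (if c = b then g b else 0)) = (\<Sum>b\<in>{1..K}. if b = c then f c * g c else 0)"
    by (intro sum.cong) auto
  also have "\<dots> = f c * g c" using assms by (simp add: sum.delta')
  finally show ?thesis .
qed

lemma sum_ind2:
  fixes f :: "nat \<Rightarrow> real"
  assumes "c \<in> {1..K}"
  shows "(\<Sum>b\<in>{1..K}. f b * (if c = b then v else 0)) = f c * v"
  using sum_indicator_K[OF assms, of f "\<lambda>_. v"] by simp

lemma sum_ind3:
  fixes f :: "nat \<Rightarrow> real"
  assumes "c \<in> {1..K}"
  shows "(\<Sum>b\<in>{1..K}. f b * ((if c = b then 1 else 0) / v)) = f c / v"
proof -
  have "(\<Sum>b\<in>{1..K}. f b * ((if c = b then 1 else 0) / v)) = (\<Sum>b\<in>{1..K}. if b = c then f c / v else 0)"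
    by (intro sum.cong refl) auto
  also have "\<dots> = f c / v" using assms by (simp add: sum.delta')
  finally show ?thesis .
qed

lemma E_lhat:
  assumes "1 \<le> t" "t \<le> N" "a \<in> {1..K}"
  shows "E N (\<lambda>xs. lhat xs t a) = l t a"
proof -
  have "E N (\<lambda>xs. lhat xs t a) = E N (\<lambda>xs. (\<lambda>h b. if a = b then l t a / p h a else 0) (take (t - 1) xs) (xs ! (t - 1)))"
    unfolding lhat_def by (intro E_cong) auto
  also have "\<dots> = E (t - 1) (\<lambda>h. \<Sum>b\<in>{1..K}. p h b * (if a = b then l t a / p h a else 0))"
    by (rule E_round[OF assms(1,2)])
  also have "\<dots> = E (t - 1) (\<lambda>h. l t a)"
  proof (intro E_cong)
    fix h
    show "(\<Sum>b\<in>{1..K}. p h b * (if a = b then l t a / p h a else 0)) = l t a"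
      using sum_ind2[OF assms(3), of "p h" "l t a / p h a"] p_pos[of h a] by simp
  qed
  finally show ?thesis by (simp add: E_const)
qed

lemma E_var:
  assumes "1 \<le> t" "t \<le> N"
  shows "E N (\<lambda>xs. (l t (xs ! (t - 1)))\<^sup>2 / p (take (t - 1) xs) (xs ! (t - 1))) = (\<Sum>b\<in>{1..K}. (l t b)\<^sup>2)"
proof -
  have "E N (\<lambda>xs. (l t (xs ! (t - 1)))\<^sup>2 / p (take (t - 1) xs) (xs ! (t - 1)))
     = E (t - 1) (\<lambda>h. \<Sum>b\<in>{1..K}. p h b * ((l t b)\<^sup>2 / p h b))"
    by (rule E_round[OF assms(1,2), where G="\<lambda>h b. (l t b)\<^sup>2 / p h b"])
  also have "\<dots> = E (t - 1) (\<lambda>h. \<Sum>b\<in>{1..K}. (l t b)\<^sup>2)"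
    using p_pos by (intro E_cong sum.cong refl) (simp add: less_imp_neq[symmetric])
  finally show ?thesis by (simp add: E_const)
qed

lemma E_pair:
  assumes s: "1 \<le> s" "s \<le> N" and t: "1 \<le> t" "t \<le> N" and st: "s \<noteq> t"
    and nr: "s < t \<Longrightarrow> (\<And>k. k \<le> t - 1 \<Longrightarrow> s \<notin> Rcv K d k)"
  shows "E N (\<lambda>xs. (if xs ! (s - 1) = xs ! (t - 1) then 1 else 0) / p (take (s - 1) xs) (xs ! (s - 1))) = 1"
proof (cases "s < t")
  case True
  have "E N (\<lambda>xs. (if xs ! (s - 1) = xs ! (t - 1) then 1 else 0) / p (take (s - 1) xs) (xs ! (s - 1)))
    = E N (\<lambda>xs. (\<lambda>h b. (if h ! (s - 1) = b then 1 else 0) / p (take (s - 1) h) (h ! (s - 1)))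
            (take (t - 1) xs) (xs ! (t - 1)))"
    using True s by (intro E_cong) auto
  also have "\<dots> = E (t - 1) (\<lambda>h. \<Sum>b\<in>{1..K}. p h b * ((if h ! (s - 1) = b then 1 else 0) / p (take (s - 1) h) (h ! (s - 1))))"
    by (rule E_round[OF t])
  also have "\<dots> = E (t - 1) (\<lambda>h. p h (h ! (s - 1)) / p (take (s - 1) h) (h ! (s - 1)))"
  proof (intro E_cong)
    fix h assume h: "h \<in> X (t - 1)"
    have "h ! (s - 1) \<in> {1..K}" using X_nth[OF h] True s by simp
    from sum_ind3[OF this, of "p h" "p (take (s - 1) h) (h ! (s - 1))"]
    show "(\<Sum>b\<in>{1..K}. p h b * ((if h ! (s - 1) = b then 1 else 0) / p (take (s - 1) h) (h ! (s - 1))))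
       = p h (h ! (s - 1)) / p (take (s - 1) h) (h ! (s - 1))"
      by simp
  qed
  also have "\<dots> = 1"
    using True s nr by (intro indep_pair) auto
  finally show ?thesis .
next
  case False
  then have ts: "t < s" using st by simp
  have "E N (\<lambda>xs. (if xs ! (s - 1) = xs ! (t - 1) then 1 else 0) / p (take (s - 1) xs) (xs ! (s - 1)))
    = E N (\<lambda>xs. (\<lambda>h b. (if b = h ! (t - 1) then 1 else 0) / p h b)
            (take (s - 1) xs) (xs ! (s - 1)))"
    using ts t by (intro E_cong) auto
  also have "\<dots> = E (s - 1) (\<lambda>h. \<Sum>b\<in>{1..K}. p h b * ((if b = h ! (t - 1) then 1 else 0) / p h b))"
    by (rule E_round[OF s])
  also have "\<dots> = E (s - 1) (\<lambda>h. 1)"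
  proof (intro E_cong)
    fix h assume h: "h \<in> X (s - 1)"
    have c: "h ! (t - 1) \<in> {1..K}" using X_nth[OF h] ts t by simp
    have "(\<Sum>b\<in>{1..K}. p h b * ((if b = h ! (t - 1) then 1 else 0) / p h b))
        = (\<Sum>b\<in>{1..K}. if b = h ! (t - 1) then 1 else 0)"
      using p_pos by (intro sum.cong refl) (simp add: less_imp_neq[symmetric])
    also have "\<dots> = 1" using c by (simp add: sum.delta')
    finally show "(\<Sum>b\<in>{1..K}. p h b * ((if b = h ! (t - 1) then 1 else 0) / p h b)) = 1" .
  qed
  finally show ?thesis by (simp add: E_const)
qed

end

lemma exp_minus_taylor2:
  fixes y :: real
  assumes "0 \<le> y"
  shows "exp (- y) \<le> 1 - y + y\<^sup>2 / 2"
proof -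
  let ?f = "\<lambda>x::real. 1 - x + x\<^sup>2 / 2 - exp (- x)"
  have "?f 0 \<le> ?f y"
  proof (rule DERIV_nonneg_imp_nondecreasing[OF assms])
    fix x :: real assume "0 \<le> x" "x \<le> y"
    have "DERIV ?f x :> (- 1 + x + exp (- x))"
      by (auto intro!: derivative_eq_intros simp: power2_eq_square)
    moreover have "- 1 + x + exp (- x) \<ge> 0" using exp_minus_ge[of x] by simp
    ultimately show "\<exists>z. DERIV ?f x :> z \<and> z \<ge> 0" by blast
  qed
  then show ?thesis by simp
qed

lemma inv_pow_le_e:
  fixes x :: real
  assumes "0 \<le> x" "real n * x \<le> 1/2"
  shows "(1 / (1 - x)) ^ n \<le> exp 1"
proof (cases "n = 0")
  case True then show ?thesis by (simp add: exp_ge_add_one_self[of 1, simplified])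
next
  case False
  then have n1: "real n \<ge> 1" by simp
  have x2: "x \<le> 1/2"
  proof -
    have "x \<le> real n * x" using n1 assms(1) by (simp add: mult_le_cancel_right1)
    then show ?thesis using assms by simp
  qed
  have pos: "0 < 1 - x" using x2 by simp
  have l: "- x - 2 * x\<^sup>2 \<le> ln (1 - x)" using ln_one_minus_pos_lower_bound[OF assms(1) x2] .
  have "real n * (x + 2 * x\<^sup>2) = real n * x * (1 + 2 * x)" by (simp add: algebra_simps power2_eq_square)
  also have "\<dots> \<le> 1/2 * 2" using assms x2 by (intro mult_mono) auto
  finally have nb: "real n * (x + 2 * x\<^sup>2) \<le> 1" by simp
  have "(1 - x) ^ n = exp (real n * ln (1 - x))" using pos by (simp add: exp_of_nat_mult)
  also have "\<dots> \<ge> exp (- 1)"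
  proof -
    have "real n * ln (1 - x) \<ge> real n * (- x - 2 * x\<^sup>2)" using l by (intro mult_left_mono) auto
    then have "real n * ln (1 - x) \<ge> - 1" using nb by (simp add: algebra_simps)
    then show ?thesis by simp
  qed
  finally have "(1 - x) ^ n \<ge> exp (- 1)" .
  then have "1 / (1 - x) ^ n \<le> 1 / exp (-1)"
    using pos by (intro divide_left_mono) auto
  then show ?thesis by (simp add: power_one_over exp_minus inverse_eq_divide)
qed

locale dewan =
  fixes K :: nat and eta :: real and F :: "nat set" and kap :: "nat \<Rightarrow> nat"
    and A :: "nat \<Rightarrow> nat" and L :: "nat \<Rightarrow> real" and P :: "nat \<Rightarrow> real"
  assumes K1: "1 \<le> K" and eta_pos: "0 < eta" and finF: "finite F"
    and kap_inj: "inj_on kap F" and A_K: "\<And>s. s \<in> F \<Longrightarrow> A s \<in> {1..K}"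
    and L_nn: "\<And>s. s \<in> F \<Longrightarrow> 0 \<le> L s" and L_le: "\<And>s. s \<in> F \<Longrightarrow> L s \<le> 1"
    and P_pos: "\<And>s. 0 < P s"
begin

definition Ks where "Ks = {1..K}"
lemma finite_Ks[simp]: "finite Ks" unfolding Ks_def by simp
lemma Ks_ne[simp]: "Ks \<noteq> {}" unfolding Ks_def using K1 by simp
lemma A_Ks: "s \<in> F \<Longrightarrow> A s \<in> Ks" unfolding Ks_def using A_K by simp

definition lh where "lh s b = (if b = A s then L s / P s else 0)"
definition Pre where "Pre c = {s\<in>F. kap s < c}"
definition wgt where "wgt U b = exp (- eta * (\<Sum>s\<in>U. lh s b))"
definition W where "W U = (\<Sum>b\<in>Ks. wgt U b)"
definition dist where "dist U b = wgt U b / W U"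

lemma lh_nn: "s \<in> F \<Longrightarrow> 0 \<le> lh s b"
  unfolding lh_def using L_nn P_pos by (simp add: less_imp_le)

lemma wgt_pos: "0 < wgt U b" unfolding wgt_def by simp

lemma W_pos: "0 < W U"
  unfolding W_def by (intro sum_pos) (auto simp: wgt_pos)

lemma dist_pos: "0 < dist U b" unfolding dist_def using wgt_pos W_pos by simp

lemma dist_sum: "(\<Sum>b\<in>Ks. dist U b) = 1"
proof -
  have "W U \<noteq> 0" using W_pos[of U] by simp
  then show ?thesis unfolding dist_def sum_divide_distrib[symmetric] by (simp add: W_def[symmetric])
qed

lemma Pre_sub: "Pre c \<subseteq> F" unfolding Pre_def by auto
lemma finite_Pre: "finite (Pre c)" using finF by (auto intro: finite_subset[OF Pre_sub])

lemma wgt_insert: "finite U \<Longrightarrow> t \<notin> U \<Longrightarrow> wgt (insert t U) b = wgt U b * exp (- eta * lh t b)"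
  unfolding wgt_def by (simp add: distrib_left exp_add[symmetric] algebra_simps)

lemma W_insert: "finite U \<Longrightarrow> t \<notin> U \<Longrightarrow> W (insert t U) = W U * (\<Sum>b\<in>Ks. dist U b * exp (- eta * lh t b))"
proof -
  assume a: "finite U" "t \<notin> U"
  have "W (insert t U) = (\<Sum>b\<in>Ks. wgt U b * exp (- eta * lh t b))"
    unfolding W_def using a by (simp add: wgt_insert)
  also have "\<dots> = W U * (\<Sum>b\<in>Ks. dist U b * exp (- eta * lh t b))"
    unfolding dist_def sum_distrib_left using W_pos[of U] by (intro sum.cong) auto
  finally show ?thesis .
qed

lemma sum_lh: "t \<in> F \<Longrightarrow> (\<Sum>b\<in>Ks. f b * lh t b) = f (A t) * (L t / P t)"
proof -
  assume t: "t \<in> F"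
  have "(\<Sum>b\<in>Ks. f b * lh t b) = (\<Sum>b\<in>Ks. if b = A t then f (A t) * (L t / P t) else 0)"
    unfolding lh_def by (intro sum.cong) auto
  also have "\<dots> = f (A t) * (L t / P t)" using A_Ks[OF t] by (simp add: sum.delta')
  finally show ?thesis .
qed

lemma pot_step:
  assumes U: "finite U" and t: "t \<in> F" "t \<notin> U"
  shows "(\<Sum>b\<in>Ks. dist U b * lh t b)
     \<le> (ln (W U) - ln (W (insert t U))) / eta + eta / 2 * (\<Sum>b\<in>Ks. dist U b * (lh t b)\<^sup>2)"
proof -
  define S where "S = (\<Sum>b\<in>Ks. dist U b * exp (- eta * lh t b))"
  have S_pos: "0 < S" unfolding S_def by (intro sum_pos) (auto simp: dist_pos)
  have "ln (W (insert t U)) - ln (W U) = ln S"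
    using W_insert[OF U t(2)] W_pos[of U] S_pos unfolding S_def[symmetric] by (simp add: ln_mult)
  also have "\<dots> \<le> S - 1" using ln_le_minus_one[OF S_pos] .
  also have "\<dots> \<le> (\<Sum>b\<in>Ks. dist U b * (1 - eta * lh t b + (eta * lh t b)\<^sup>2 / 2)) - 1"
    unfolding S_def
  proof (intro diff_right_mono sum_mono mult_left_mono)
    fix b assume "b \<in> Ks"
    have "0 \<le> eta * lh t b" using eta_pos lh_nn[OF t(1)] by simp
    from exp_minus_taylor2[OF this]
    show "exp (- eta * lh t b) \<le> 1 - eta * lh t b + (eta * lh t b)\<^sup>2 / 2" by simp
    show "0 \<le> dist U b" using dist_pos[of U b] by simp
  qed
  also have "\<dots> = - eta * (\<Sum>b\<in>Ks. dist U b * lh t b) + eta\<^sup>2 / 2 * (\<Sum>b\<in>Ks. dist U b * (lh t b)\<^sup>2)"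
    using dist_sum[of U]
    by (simp add: algebra_simps sum.distrib sum_subtractf sum_distrib_left power_mult_distrib sum_negf)
  finally have "eta * (\<Sum>b\<in>Ks. dist U b * lh t b)
      \<le> (ln (W U) - ln (W (insert t U))) + eta\<^sup>2 / 2 * (\<Sum>b\<in>Ks. dist U b * (lh t b)\<^sup>2)"
    by simp
  then have "eta * (\<Sum>b\<in>Ks. dist U b * lh t b) / eta
      \<le> ((ln (W U) - ln (W (insert t U))) + eta\<^sup>2 / 2 * (\<Sum>b\<in>Ks. dist U b * (lh t b)\<^sup>2)) / eta"
    using eta_pos by (intro divide_right_mono) auto
  then show ?thesis using eta_pos by (simp add: add_divide_distrib power2_eq_square)
qed

lemma Pre_0: "Pre 0 = {}" unfolding Pre_def by simp

lemma tele:
  fixes g :: "nat set \<Rightarrow> real"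
  shows "(\<Sum>t\<in>Pre c. g (Pre (kap t)) - g (insert t (Pre (kap t)))) = g {} - g (Pre c)"
proof (induction c)
  case 0 then show ?case by (simp add: Pre_0)
next
  case (Suc c)
  show ?case
  proof (cases "\<exists>t\<in>F. kap t = c")
    case True
    then obtain t where t: "t \<in> F" "kap t = c" by blast
    have e1: "Pre (Suc c) = insert t (Pre c)"
      unfolding Pre_def using t kap_inj by (auto simp: inj_on_def less_Suc_eq)
    have e2: "t \<notin> Pre c" unfolding Pre_def using t by simp
    have e3: "Pre (kap t) = Pre c" using t by simp
    show ?thesis unfolding e1 using finite_Pre[of c] e2 Suc e3 by simp
  next
    case False
    then have "Pre (Suc c) = Pre c" unfolding Pre_def by (auto simp: less_Suc_eq)
    then show ?thesis using Suc by simp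
  qed
qed

definition cbig where "cbig = Suc (Max (insert 0 (kap ` F)))"

lemma Pre_cbig: "Pre cbig = F"
proof -
  have "kap s < cbig" if "s \<in> F" for s
    unfolding cbig_def using that finF by (simp add: le_imp_less_Suc)
  then show ?thesis unfolding Pre_def by auto
qed

lemma step_upper:
  assumes U: "finite U" and t: "t \<in> F" "t \<notin> U"
    and D: "0 < 1 - eta * dist U (A t) * (L t / P t)"
  shows "dist (insert t U) b \<le> dist U b / (1 - eta * dist U (A t) * (L t / P t))"
proof -
  define S where "S = (\<Sum>c\<in>Ks. dist U c * exp (- eta * lh t c))"
  have "(\<Sum>c\<in>Ks. dist U c * (1 - eta * lh t c)) \<le> S"
    unfolding S_def
  proof (intro sum_mono mult_left_mono)
    fix c show "1 - eta * lh t c \<le> exp (- eta * lh t c)" using exp_minus_ge[of "eta * lh t c"] by simp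
    show "0 \<le> dist U c" using dist_pos[of U c] by simp
  qed
  moreover have "(\<Sum>c\<in>Ks. dist U c * (1 - eta * lh t c)) = 1 - eta * dist U (A t) * (L t / P t)"
  proof -
    have "(\<Sum>c\<in>Ks. dist U c * (1 - eta * lh t c)) = (\<Sum>c\<in>Ks. dist U c) - eta * (\<Sum>c\<in>Ks. dist U c * lh t c)"
      by (simp add: algebra_simps sum_subtractf sum_distrib_left)
    then show ?thesis using dist_sum[of U] sum_lh[OF t(1), of "dist U"] by simp
  qed
  ultimately have SD: "1 - eta * dist U (A t) * (L t / P t) \<le> S" by simp
  have WI: "W (insert t U) = W U * S" unfolding S_def by (rule W_insert[OF U t(2)])
  have "dist (insert t U) b = wgt U b * exp (- eta * lh t b) / (W U * S)"
    unfolding dist_def WI wgt_insert[OF U t(2)] ..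
  also have "\<dots> \<le> wgt U b / (W U * S)"
    using W_pos[of U] SD D wgt_pos[of U b] lh_nn[OF t(1), of b] eta_pos
    by (intro divide_right_mono) (auto intro!: mult_pos_pos)
  also have "\<dots> \<le> wgt U b / (W U * (1 - eta * dist U (A t) * (L t / P t)))"
    using W_pos[of U] SD D wgt_pos[of U b]
    by (intro divide_left_mono mult_left_mono mult_pos_pos) auto
  also have "\<dots> = dist U b / (1 - eta * dist U (A t) * (L t / P t))"
    unfolding dist_def by simp
  finally show ?thesis .
qed

lemma lower:
  assumes "U \<subseteq> V" "V \<subseteq> F"
  shows "dist U b * (1 - eta * (\<Sum>s\<in>V - U. lh s b)) \<le> dist V b"
proof -
  have fV: "finite V" using assms finF by (auto intro: finite_subset)
  have fU: "finite U" using assms fV by (auto intro: finite_subset)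
  have split: "(\<Sum>s\<in>V. lh s c) = (\<Sum>s\<in>U. lh s c) + (\<Sum>s\<in>V - U. lh s c)" for c
    using sum.subset_diff[OF assms(1) fV, of "\<lambda>s. lh s c"] by simp
  have wV: "wgt V c = wgt U c * exp (- eta * (\<Sum>s\<in>V - U. lh s c))" for c
    unfolding wgt_def split by (simp add: distrib_left exp_add[symmetric] algebra_simps)
  have nn: "0 \<le> (\<Sum>s\<in>V - U. lh s c)" for c using assms by (intro sum_nonneg lh_nn) auto
  have WVU: "W V \<le> W U"
    unfolding W_def
  proof (intro sum_mono)
    fix c
    have "exp (- eta * (\<Sum>s\<in>V - U. lh s c)) \<le> 1" using nn[of c] eta_pos by simp
    then show "wgt V c \<le> wgt U c" unfolding wV using wgt_pos[of U c] by (simp add: mult_le_cancel_left1)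
  qed
  have "dist U b * (1 - eta * (\<Sum>s\<in>V - U. lh s b)) = wgt U b * (1 - eta * (\<Sum>s\<in>V - U. lh s b)) / W U"
    unfolding dist_def by simp
  also have "\<dots> \<le> wgt V b / W U"
    unfolding wV using W_pos[of U] wgt_pos[of U b] exp_minus_ge[of "eta * (\<Sum>s\<in>V - U. lh s b)"]
    by (intro divide_right_mono mult_left_mono) auto
  also have "\<dots> \<le> wgt V b / W V"
    using W_pos[of V] wgt_pos[of V b] WVU by (intro divide_left_mono) auto
  finally show ?thesis unfolding dist_def .
qed

lemma Pre_mono: "c \<le> c' \<Longrightarrow> Pre c \<subseteq> Pre c'" unfolding Pre_def by auto

lemma chain:
  assumes "c \<le> c'" "card (Pre c' - Pre c) = n" "real n * (exp 1 * eta) \<le> 1/2"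
    "\<forall>s\<in>Pre c' - Pre c. dist (Pre (kap s)) (A s) \<le> exp 1 * P s"
  shows "dist (Pre c') b \<le> (1 / (1 - exp 1 * eta)) ^ n * dist (Pre c) b"
  using assms
proof (induction n arbitrary: c')
  case 0
  have "Pre c' - Pre c = {}" using 0 finite_Pre[of c'] by simp
  then have "Pre c' = Pre c" using Pre_mono[OF 0(1)] by auto
  then show ?case by simp
next
  case (Suc n)
  define D where "D = Pre c' - Pre c"
  have fD: "finite D" unfolding D_def using finite_Pre by simp
  have neD: "D \<noteq> {}" using Suc(3) unfolding D_def by (metis card.empty nat.simps(3))
  define v where "v = Max (kap ` D)"
  have "v \<in> kap ` D" unfolding v_def using fD neD by simp
  then obtain s where sD: "s \<in> D" and sv: "kap s = v" by auto
  have maxD: "kap u \<le> kap s" if "u \<in> D" for u unfolding sv v_def using fD that by simp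
  have sF: "s \<in> F" and sc': "kap s < c'" and sc: "\<not> kap s < c" using sD unfolding D_def Pre_def by auto
  have eq: "Pre c' = insert s (Pre (kap s))"
  proof (intro set_eqI iffI)
    fix u assume u: "u \<in> Pre c'"
    show "u \<in> insert s (Pre (kap s))"
    proof (cases "u = s")
      case False
      have uF: "u \<in> F" using u unfolding Pre_def by simp
      have "kap u < kap s"
      proof (cases "u \<in> Pre c")
        case True then show ?thesis using sc unfolding Pre_def by simp
      next
        case False
        then have "u \<in> D" using u unfolding D_def by simp
        then have "kap u \<le> kap s" by (rule maxD)
        moreover have "kap u \<noteq> kap s" using kap_inj uF sF \<open>u \<noteq> s\<close> by (auto simp: inj_on_def)
        ultimately show ?thesis by simp
      qed
      then show ?thesis using uF unfolding Pre_def by simp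
    qed simp
  next
    fix u assume "u \<in> insert s (Pre (kap s))"
    then show "u \<in> Pre c'" using sD sc' unfolding D_def Pre_def by auto
  qed
  have snot: "s \<notin> Pre (kap s)" unfolding Pre_def by simp
  have c_le: "c \<le> kap s" using sc by simp
  have Dm: "Pre (kap s) - Pre c = D - {s}"
    unfolding D_def using eq snot by auto
  have cardm: "card (Pre (kap s) - Pre c) = n" unfolding Dm using Suc(3) sD fD unfolding D_def by simp
  have xle: "real n * (exp 1 * eta) \<le> 1/2"
    using Suc(4) eta_pos by (smt (verit) mult_right_mono of_nat_le_iff le_Suc_eq exp_gt_zero mult_pos_pos)
  have IH: "dist (Pre (kap s)) b \<le> (1 / (1 - exp 1 * eta)) ^ n * dist (Pre c) b"
    using Suc.IH[OF c_le cardm xle] Suc(5) Dm unfolding D_def by auto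
  have x1: "exp 1 * eta \<le> 1/2"
  proof -
    have "0 \<le> real n * (exp 1 * eta)" using eta_pos by simp
    then show ?thesis using Suc(4) by (simp add: algebra_simps)
  qed
  have hs: "dist (Pre (kap s)) (A s) \<le> exp 1 * P s" using Suc(5) sD unfolding D_def by auto
  have Den: "1 - exp 1 * eta \<le> 1 - eta * dist (Pre (kap s)) (A s) * (L s / P s)"
  proof -
    have "dist (Pre (kap s)) (A s) * (L s / P s) \<le> exp 1 * P s * (1 / P s)"
      using hs L_le[OF sF] L_nn[OF sF] P_pos[of s] dist_pos
      by (intro mult_mono divide_right_mono) (auto simp: less_imp_le)
    then have "dist (Pre (kap s)) (A s) * (L s / P s) \<le> exp 1" using P_pos[of s] by simp
    then have "eta * (dist (Pre (kap s)) (A s) * (L s / P s)) \<le> eta * exp 1"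
      using eta_pos by (intro mult_left_mono) auto
    then show ?thesis by (simp add: algebra_simps)
  qed
  have Dpos: "0 < 1 - exp 1 * eta" using x1 by simp
  have "dist (Pre c') b = dist (insert s (Pre (kap s))) b" using eq by simp
  also have "\<dots> \<le> dist (Pre (kap s)) b / (1 - eta * dist (Pre (kap s)) (A s) * (L s / P s))"
    using Den Dpos by (intro step_upper[OF finite_Pre sF snot]) simp
  also have "\<dots> \<le> dist (Pre (kap s)) b / (1 - exp 1 * eta)"
    using Den Dpos dist_pos[of "Pre (kap s)" b] by (intro divide_left_mono) (auto intro: mult_pos_pos)
  also have "\<dots> \<le> (1 / (1 - exp 1 * eta)) ^ n * dist (Pre c) b / (1 - exp 1 * eta)"
    using IH Dpos by (intro divide_right_mono) auto
  also have "\<dots> = (1 / (1 - exp 1 * eta)) ^ Suc n * dist (Pre c) b"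
    by (simp add: field_simps)
  finally show ?case .
qed

end

locale dewan2 = dewan +
  fixes cs :: "nat \<Rightarrow> nat"
  assumes cs_le: "\<And>s. s \<in> F \<Longrightarrow> cs s \<le> kap s"
    and P_eq: "\<And>s. s \<in> F \<Longrightarrow> P s = dist (Pre (cs s)) (A s)"
    and cs_card: "\<And>s. s \<in> F \<Longrightarrow> real (card (Pre (kap s) - Pre (cs s))) * (exp 1 * eta) \<le> 1/2"
begin

lemma ratio_aux: "\<forall>s\<in>F. kap s = k \<longrightarrow> (\<forall>b. dist (Pre (kap s)) b \<le> exp 1 * dist (Pre (cs s)) b)"
proof (induction k rule: less_induct)
  case (less k)
  show ?case
  proof (intro ballI impI allI)
    fix s b assume sF: "s \<in> F" and sk: "kap s = k"
    have hyp: "\<forall>u\<in>Pre (kap s) - Pre (cs s). dist (Pre (kap u)) (A u) \<le> exp 1 * P u"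
    proof
      fix u assume u: "u \<in> Pre (kap s) - Pre (cs s)"
      then have uF: "u \<in> F" and uk: "kap u < k" unfolding Pre_def using sk by auto
      then have "dist (Pre (kap u)) (A u) \<le> exp 1 * dist (Pre (cs u)) (A u)" using less.IH by blast
      then show "dist (Pre (kap u)) (A u) \<le> exp 1 * P u" using P_eq[OF uF] by simp
    qed
    define n where "n = card (Pre (kap s) - Pre (cs s))"
    have "dist (Pre (kap s)) b \<le> (1 / (1 - exp 1 * eta)) ^ n * dist (Pre (cs s)) b"
      using cs_le[OF sF] cs_card[OF sF] hyp unfolding n_def by (intro chain) auto
    also have "\<dots> \<le> exp 1 * dist (Pre (cs s)) b"
      using inv_pow_le_e[of "exp 1 * eta" n] cs_card[OF sF] eta_pos dist_pos[of "Pre (cs s)" b]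
      unfolding n_def by (intro mult_right_mono) auto
    finally show "dist (Pre (kap s)) b \<le> exp 1 * dist (Pre (cs s)) b" .
  qed
qed

lemma ratio: "s \<in> F \<Longrightarrow> dist (Pre (kap s)) b \<le> exp 1 * dist (Pre (cs s)) b"
  using ratio_aux by blast

lemma W_empty: "W {} = real K"
  unfolding W_def wgt_def Ks_def by simp

lemma per_round:
  assumes tF: "t \<in> F"
  shows "L t \<le> (ln (W (Pre (kap t))) - ln (W (insert t (Pre (kap t))))) / eta
           + eta * exp 1 / 2 * ((L t)\<^sup>2 / P t)
           + eta * (\<Sum>s\<in>Pre (kap t) - Pre (cs t). (if A s = A t then 1 else 0) / P s)"
proof -
  define q where "q = dist (Pre (kap t))"
  define Dt where "Dt = Pre (kap t) - Pre (cs t)"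
  have tn: "t \<notin> Pre (kap t)" unfolding Pre_def by simp
  have Pt: "P t = dist (Pre (cs t)) (A t)" using P_eq[OF tF] .
  have Ppos: "0 < P t" using P_pos .
  have Lt: "0 \<le> L t" "L t \<le> 1" using L_nn[OF tF] L_le[OF tF] by auto
  have qsum: "(\<Sum>b\<in>Ks. q b * lh t b) = q (A t) * (L t / P t)" using sum_lh[OF tF] .
  have qvar: "(\<Sum>b\<in>Ks. q b * (lh t b)\<^sup>2) = q (A t) * (L t / P t) * (L t / P t)"
  proof -
    have "(\<Sum>b\<in>Ks. q b * (lh t b)\<^sup>2) = (\<Sum>b\<in>Ks. (q b * lh t b) * lh t b)"
      by (simp add: power2_eq_square mult.assoc)
    also have "\<dots> = q (A t) * lh t (A t) * (L t / P t)" using sum_lh[OF tF, of "\<lambda>b. q b * lh t b"] .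
    also have "\<dots> = q (A t) * (L t / P t) * (L t / P t)" unfolding lh_def by simp
    finally show ?thesis .
  qed
  have pot: "(\<Sum>b\<in>Ks. q b * lh t b)
     \<le> (ln (W (Pre (kap t))) - ln (W (insert t (Pre (kap t))))) / eta + eta / 2 * (\<Sum>b\<in>Ks. q b * (lh t b)\<^sup>2)"
    unfolding q_def by (rule pot_step[OF finite_Pre tF tn])
  have rq: "q (A t) \<le> exp 1 * P t" unfolding q_def Pt using ratio[OF tF] .
  have var: "eta / 2 * (\<Sum>b\<in>Ks. q b * (lh t b)\<^sup>2) \<le> eta * exp 1 / 2 * ((L t)\<^sup>2 / P t)"
  proof -
    have "q (A t) * (L t / P t) * (L t / P t) \<le> exp 1 * P t * (L t / P t) * (L t / P t)"
      using rq Lt Ppos by (intro mult_right_mono) auto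
    also have "\<dots> = exp 1 * ((L t)\<^sup>2 / P t)" using Ppos by (simp add: power2_eq_square)
    finally have "(\<Sum>b\<in>Ks. q b * (lh t b)\<^sup>2) \<le> exp 1 * ((L t)\<^sup>2 / P t)" using qvar by simp
    then have "eta / 2 * (\<Sum>b\<in>Ks. q b * (lh t b)\<^sup>2) \<le> eta / 2 * (exp 1 * ((L t)\<^sup>2 / P t))"
      using eta_pos by (intro mult_left_mono) auto
    then show ?thesis by simp
  qed
  have low: "P t * (1 - eta * (\<Sum>s\<in>Dt. lh s (A t))) \<le> q (A t)"
    unfolding Pt q_def Dt_def using lower[OF Pre_mono[OF cs_le[OF tF]] Pre_sub] .
  have lhb: "(\<Sum>s\<in>Dt. lh s (A t)) \<le> (\<Sum>s\<in>Dt. (if A s = A t then 1 else 0) / P s)"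
  proof (intro sum_mono)
    fix s assume "s \<in> Dt"
    then have sF: "s \<in> F" unfolding Dt_def Pre_def by auto
    show "lh s (A t) \<le> (if A s = A t then 1 else 0) / P s"
      unfolding lh_def using L_le[OF sF] P_pos[of s] by (auto intro: divide_right_mono)
  qed
  have lhnn: "0 \<le> (\<Sum>s\<in>Dt. lh s (A t))" by (intro sum_nonneg lh_nn) (auto simp: Dt_def Pre_def)
  have drift: "L t \<le> q (A t) * (L t / P t) + eta * (\<Sum>s\<in>Dt. (if A s = A t then 1 else 0) / P s)"
  proof -
    have "L t = P t * (L t / P t)" using Ppos by simp
    also have "\<dots> = P t * (1 - eta * (\<Sum>s\<in>Dt. lh s (A t))) * (L t / P t)
                    + eta * (\<Sum>s\<in>Dt. lh s (A t)) * L t"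
      using Ppos by (simp add: algebra_simps)
    also have "\<dots> \<le> q (A t) * (L t / P t) + eta * (\<Sum>s\<in>Dt. lh s (A t)) * 1"
      using low Lt Ppos eta_pos lhnn by (intro add_mono mult_right_mono mult_left_mono) auto
    also have "\<dots> \<le> q (A t) * (L t / P t) + eta * (\<Sum>s\<in>Dt. (if A s = A t then 1 else 0) / P s)"
      using lhb eta_pos by (intro add_left_mono mult_left_mono) auto
    finally show ?thesis .
  qed
  show ?thesis using drift pot var qsum unfolding Dt_def by linarith
qed

theorem main_bound:
  assumes a: "a \<in> Ks"
  shows "(\<Sum>t\<in>F. L t) \<le> ln (real K) / eta + (\<Sum>t\<in>F. lh t a)
           + eta * exp 1 / 2 * (\<Sum>t\<in>F. (L t)\<^sup>2 / P t)
           + eta * (\<Sum>t\<in>F. \<Sum>s\<in>Pre (kap t) - Pre (cs t). (if A s = A t then 1 else 0) / P s)"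
proof -
  have "(\<Sum>t\<in>F. L t) \<le> (\<Sum>t\<in>F. (ln (W (Pre (kap t))) - ln (W (insert t (Pre (kap t))))) / eta
           + eta * exp 1 / 2 * ((L t)\<^sup>2 / P t)
           + eta * (\<Sum>s\<in>Pre (kap t) - Pre (cs t). (if A s = A t then 1 else 0) / P s))"
    by (intro sum_mono per_round)
  also have "\<dots> = (\<Sum>t\<in>F. ln (W (Pre (kap t))) - ln (W (insert t (Pre (kap t))))) / eta
           + eta * exp 1 / 2 * (\<Sum>t\<in>F. (L t)\<^sup>2 / P t)
           + eta * (\<Sum>t\<in>F. \<Sum>s\<in>Pre (kap t) - Pre (cs t). (if A s = A t then 1 else 0) / P s)"
    by (simp add: sum.distrib sum_distrib_left sum_divide_distrib)
  also have "(\<Sum>t\<in>F. ln (W (Pre (kap t))) - ln (W (insert t (Pre (kap t)))))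
      = ln (W {}) - ln (W F)"
    using tele[of "\<lambda>U. ln (W U)" cbig] unfolding Pre_cbig .
  also have "ln (W {}) - ln (W F) \<le> ln (real K) + eta * (\<Sum>t\<in>F. lh t a)"
  proof -
    have "wgt F a \<le> W F" unfolding W_def using a wgt_pos
      by (intro member_le_sum) (auto simp: less_imp_le)
    then have "ln (wgt F a) \<le> ln (W F)" using wgt_pos[of F a] by simp
    then show ?thesis unfolding W_empty wgt_def by simp
  qed
  finally show ?thesis using eta_pos
    by (simp add: divide_right_mono add_divide_distrib)
qed

end

declare epoch.simps[simp del]

lemma omega_ge1: "1 \<le> omega m" unfolding omega_def by simp
lemma omega_pos: "0 < omega m" unfolding omega_def by simp
lemma omega_Suc: "omega (Suc m) = 2 * omega m" unfolding omega_def by simp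

locale ep =
  fixes K :: nat and d :: "nat \<Rightarrow> nat"
  assumes K2: "2 \<le> K"
begin

lemma lnK_pos: "0 < ln (real K)" using K2 by simp

lemma beta_pos: "0 < beta K m"
  unfolding beta_def using lnK_pos omega_pos by simp

lemma beta_lnK: "beta K m * ln (real K) = sqrt (omega m) / (4 * exp 1)"
  unfolding beta_def using lnK_pos by simp

lemma eta_eq: "eta K m = ln (real K) / sqrt (omega m)"
  unfolding eta_def beta_def using lnK_pos omega_pos by (simp add: field_simps)

lemma single_stay:
  assumes "exp 1 * real K * ln (real K) / 2 + sqrt (omega m) / (4 * exp 1) \<le> omega m"
  shows "stay_cond K d m t t"
proof -
  have c: "card {s \<in> {t..t}. beta K m \<le> real (d s)} \<le> 1"
    by (rule order_trans[OF card_mono[of "{t}"]]) auto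
  have c2: "(real (card {s \<in> {t..t}. beta K m \<le> real (d s)}))\<^sup>2 \<le> omega m"
  proof -
    have "(real (card {s \<in> {t..t}. beta K m \<le> real (d s)}))\<^sup>2 \<le> 1"
      using c by (simp add: power_le_one)
    then show ?thesis using omega_ge1[of m] by simp
  qed
  have sum: "(\<Sum>s\<in>{s \<in> {t..t}. real (d s) < beta K m}. real (d s)) \<le> beta K m"
  proof (cases "real (d t) < beta K m")
    case True
    then have "{s \<in> {t..t}. real (d s) < beta K m} = {t}" by auto
    then show ?thesis using True by simp
  next
    case False
    then have e: "{s \<in> {t..t}. real (d s) < beta K m} = {}" by auto
    show ?thesis unfolding e using beta_pos[of m] by simp
  qed
  have "(exp 1 * real K * real (t + 1 - t) / 2 + (\<Sum>s\<in>{s \<in> {t..t}. real (d s) < beta K m}. real (d s))) * ln (real K)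
      \<le> (exp 1 * real K * 1 / 2 + beta K m) * ln (real K)"
    using sum lnK_pos by (intro mult_right_mono) auto
  also have "\<dots> = exp 1 * real K * ln (real K) / 2 + sqrt (omega m) / (4 * exp 1)"
    using beta_lnK[of m] by (simp add: algebra_simps)
  also have "\<dots> \<le> omega m" by (rule assms)
  finally show ?thesis unfolding stay_cond_def using c2 by simp
qed

lemma sqrt_le_self: "1 \<le> x \<Longrightarrow> sqrt x \<le> (x::real)"
  by (metis abs_of_nonneg dual_order.trans le_numeral_extra(1) linear real_sqrt_abs real_sqrt_le_mono
      real_sqrt_one mult_le_cancel_left1 real_sqrt_mult_self zero_le_one
      order.strict_iff_not real_sqrt_ge_one sqrt_le_D)

lemma big_stay:
  assumes "exp 1 * real K * ln (real K) \<le> omega m"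
  shows "stay_cond K d m t t"
proof (rule single_stay)
  have "sqrt (omega m) \<le> omega m" using omega_ge1 by (rule sqrt_le_self)
  then have "sqrt (omega m) / (4 * exp 1) \<le> omega m / 2"
    using omega_pos[of m] exp_ge_add_one_self[of 1]
    by (smt (verit) divide_left_mono divide_right_mono exp_gt_zero mult_pos_pos)
  then show "exp 1 * real K * ln (real K) / 2 + sqrt (omega m) / (4 * exp 1) \<le> omega m"
    using assms by simp
qed

lemma stay_exists: "\<exists>m'. m < m' \<and> stay_cond K d m' t t"
proof -
  define m' where "m' = Suc m + nat \<lceil>exp 1 * real K * ln (real K)\<rceil>"
  have "exp 1 * real K * ln (real K) \<le> real (nat \<lceil>exp 1 * real K * ln (real K)\<rceil>)"
    by linarith
  also have "\<dots> \<le> real m'" unfolding m'_def by simp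
  also have "\<dots> \<le> omega m'" unfolding omega_def
    using less_exp[of m'] by (metis less_imp_le of_nat_le_iff of_nat_numeral of_nat_power)
  finally have "stay_cond K d m' t t" by (rule big_stay)
  then show ?thesis by (intro exI[of _ m']) (simp add: m'_def)
qed

lemma stay_next:
  assumes "stay_cond K d m r t" "r \<le> t"
  shows "stay_cond K d (Suc m) t' t'"
proof (rule single_stay)
  have s: "(exp 1 * real K * real (t + 1 - r) / 2 + (\<Sum>s\<in>{s \<in> {r..t}. real (d s) < beta K m}. real (d s))) * ln (real K) \<le> omega m"
    using assms(1) unfolding stay_cond_def by simp
  have "exp 1 * real K * 1 / 2 \<le> exp 1 * real K * real (t + 1 - r) / 2"
    using assms(2) by (intro divide_right_mono mult_left_mono) auto
  then have "exp 1 * real K * 1 / 2 * ln (real K) \<le> (exp 1 * real K * real (t + 1 - r) / 2 + (\<Sum>s\<in>{s \<in> {r..t}. real (d s) < beta K m}. real (d s))) * ln (real K)"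
    using lnK_pos by (intro mult_right_mono add_increasing2 sum_nonneg) auto
  then have a: "exp 1 * real K * ln (real K) / 2 \<le> omega m" using s by simp
  have "sqrt (omega (Suc m)) \<le> omega (Suc m)" using omega_ge1 by (rule sqrt_le_self)
  then have "sqrt (omega (Suc m)) / (4 * exp 1) \<le> omega (Suc m) / 2"
    using omega_pos[of "Suc m"] exp_ge_add_one_self[of 1]
    by (smt (verit) divide_left_mono divide_right_mono exp_gt_zero mult_pos_pos)
  then show "exp 1 * real K * ln (real K) / 2 + sqrt (omega (Suc m)) / (4 * exp 1) \<le> omega (Suc m)"
    using a omega_Suc[of m] by simp
qed

lemma epoch_1: "epoch K d (Suc 0) = (LEAST m. stay_cond K d m 1 1, 1)"
  by (subst epoch.simps(2)) simp

lemma epoch_Suc: assumes "1 \<le> t" shows "epoch K d (Suc t) =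
   (let (m, r) = epoch K d t in
            if stay_cond K d m r (Suc t) then (m, r)
            else (LEAST m'. m < m' \<and> stay_cond K d m' (Suc t) (Suc t), Suc t))"
  apply (subst epoch.simps(2))
  using assms by (simp only: if_False Let_def) simp

lemma epoch_inv:
  assumes "1 \<le> t" "epoch K d t = (m, r)"
  shows "1 \<le> r \<and> r \<le> t \<and> stay_cond K d m r t \<and> (\<forall>s. r \<le> s \<and> s \<le> t \<longrightarrow> epoch K d s = (m, r))"
  using assms
proof (induction t arbitrary: m r rule: nat_induct_at_least)
  case base
  have e1: "epoch K d 1 = (LEAST m. stay_cond K d m 1 1, 1)" using epoch_1 by simp
  have ex: "\<exists>m. stay_cond K d m 1 1" using stay_exists by blast
  from base e1 have "m = (LEAST m. stay_cond K d m 1 1)" "r = 1" by auto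
  then show ?case using LeastI_ex[OF ex] base by auto
next
  case (Suc t)
  obtain m0 r0 where e0: "epoch K d t = (m0, r0)" by (cases "epoch K d t")
  note IH = Suc.IH[OF e0]
  show ?case
  proof (cases "stay_cond K d m0 r0 (Suc t)")
    case True
    then have "epoch K d (Suc t) = (m0, r0)" using epoch_Suc[OF Suc.hyps] e0 by simp
    then have "m = m0" "r = r0" using Suc.prems by auto
    then show ?thesis using IH True \<open>epoch K d (Suc t) = (m0, r0)\<close> by (auto simp: le_Suc_eq)
  next
    case False
    then have ee: "epoch K d (Suc t) = (LEAST m'. m0 < m' \<and> stay_cond K d m' (Suc t) (Suc t), Suc t)"
      using epoch_Suc[OF Suc.hyps] e0 by simp
    then have "m = (LEAST m'. m0 < m' \<and> stay_cond K d m' (Suc t) (Suc t))" "r = Suc t" using Suc.prems by auto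
    moreover have "stay_cond K d (LEAST m'. m0 < m' \<and> stay_cond K d m' (Suc t) (Suc t)) (Suc t) (Suc t)"
      using LeastI_ex[OF stay_exists[of m0 "Suc t"]] by simp
    ultimately show ?thesis using ee by auto
  qed
qed

lemma epoch_step:
  assumes "1 \<le> t"
  shows "epoch K d (Suc t) = epoch K d t \<or>
    (snd (epoch K d (Suc t)) = Suc t \<and> fst (epoch K d t) < fst (epoch K d (Suc t))
     \<and> fst (epoch K d (Suc t)) \<le> Suc (fst (epoch K d t))
     \<and> \<not> stay_cond K d (fst (epoch K d t)) (snd (epoch K d t)) (Suc t))"
proof -
  obtain m0 r0 where e0: "epoch K d t = (m0, r0)" by (cases "epoch K d t")
  note inv = epoch_inv[OF assms e0]
  show ?thesis
  proof (cases "stay_cond K d m0 r0 (Suc t)")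
    case True
    then show ?thesis using epoch_Suc[OF assms] e0 by simp
  next
    case False
    then have ee: "epoch K d (Suc t) = (LEAST m'. m0 < m' \<and> stay_cond K d m' (Suc t) (Suc t), Suc t)"
      using epoch_Suc[OF assms] e0 by simp
    have w: "m0 < Suc m0 \<and> stay_cond K d (Suc m0) (Suc t) (Suc t)"
      using stay_next[of m0 r0 t] inv by auto
    have "(LEAST m'. m0 < m' \<and> stay_cond K d m' (Suc t) (Suc t)) \<le> Suc m0"
      by (rule Least_le[of "\<lambda>m'. m0 < m' \<and> stay_cond K d m' (Suc t) (Suc t)", OF w])
    moreover have "m0 < (LEAST m'. m0 < m' \<and> stay_cond K d m' (Suc t) (Suc t))"
      using LeastI_ex[OF stay_exists[of m0 "Suc t"]] by simp
    ultimately show ?thesis using ee e0 False by simp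
  qed
qed

lemma epoch_mono:
  assumes "1 \<le> t1" "t1 \<le> t2"
  shows "fst (epoch K d t1) \<le> fst (epoch K d t2) \<and>
         (epoch K d t1 \<noteq> epoch K d t2 \<longrightarrow> fst (epoch K d t1) < fst (epoch K d t2))"
  using assms(2)
proof (induction t2 rule: dec_induct)
  case base then show ?case by simp
next
  case (step t)
  have "1 \<le> t" using assms step by simp
  from epoch_step[OF this] show ?case
  proof
    assume "epoch K d (Suc t) = epoch K d t" then show ?case using step.IH by simp
  next
    assume "snd (epoch K d (Suc t)) = Suc t \<and> fst (epoch K d t) < fst (epoch K d (Suc t))
     \<and> fst (epoch K d (Suc t)) \<le> Suc (fst (epoch K d t))
     \<and> \<not> stay_cond K d (fst (epoch K d t)) (snd (epoch K d t)) (Suc t)"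
    then have "fst (epoch K d t) < fst (epoch K d (Suc t))" by blast
    then show ?case using step.IH by (meson le_less_trans less_imp_le)
  qed
qed

lemma epoch_same:
  assumes "1 \<le> t1" "1 \<le> t2" "fst (epoch K d t1) = fst (epoch K d t2)"
  shows "epoch K d t1 = epoch K d t2"
proof (cases "t1 \<le> t2")
  case True
  then show ?thesis using epoch_mono[OF assms(1) True] assms(3) by (metis less_irrefl)
next
  case False
  then have t21: "t2 \<le> t1" by simp
  show ?thesis using epoch_mono[OF assms(2) t21] assms(3) by (metis less_irrefl)
qed

end

context
  fixes d :: "nat \<Rightarrow> nat" and NN :: nat
begin

definition kapp :: "nat \<Rightarrow> nat" where "kapp s = (s + d s) * NN + s"

lemma kapp_lt_iff: "u < NN \<Longrightarrow> kapp u < v * NN \<longleftrightarrow> u + d u < v"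
proof
  assume u: "u < NN" and k: "kapp u < v * NN"
  show "u + d u < v"
  proof (rule ccontr)
    assume "\<not> u + d u < v"
    then have "v \<le> u + d u" by simp
    then have "v * NN \<le> (u + d u) * NN" by (rule mult_le_mono1)
    then show False using k unfolding kapp_def by linarith
  qed
next
  assume u: "u < NN" and "u + d u < v"
  then have "Suc (u + d u) \<le> v" by simp
  then have "Suc (u + d u) * NN \<le> v * NN" by (rule mult_le_mono1)
  then show "kapp u < v * NN" unfolding kapp_def using u by simp
qed

lemma kapp_lt_le: "s < NN \<Longrightarrow> t < NN \<Longrightarrow> kapp s < kapp t \<Longrightarrow> s + d s \<le> t + d t"
proof (rule ccontr)
  assume s: "s < NN" and t: "t < NN" and k: "kapp s < kapp t" and "\<not> s + d s \<le> t + d t"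
  then have "Suc (t + d t) \<le> s + d s" by simp
  then have "Suc (t + d t) * NN \<le> (s + d s) * NN" by (rule mult_le_mono1)
  then have "kapp t < kapp s" unfolding kapp_def using t by simp
  then show False using k by simp
qed

lemma kapp_inj: "inj_on kapp {..<NN}"
proof (rule inj_onI)
  fix u v assume "u \<in> {..<NN}" "v \<in> {..<NN}" "kapp u = kapp v"
  then have "kapp u mod NN = kapp v mod NN" by simp
  then show "u = v" using \<open>u \<in> {..<NN}\<close> \<open>v \<in> {..<NN}\<close> unfolding kapp_def by simp
qed

definition Dp :: "nat set \<Rightarrow> nat \<Rightarrow> nat set" where
  "Dp F t = {s \<in> F. kapp s < kapp t \<and> \<not> kapp s < t * NN}"

lemma Dp_facts:
  assumes "F \<subseteq> {..<NN}" "t \<in> F" "s \<in> Dp F t"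
  shows "s \<in> F \<and> s \<noteq> t \<and> t \<le> s + d s \<and> (t < s \<longrightarrow> s \<le> t + d t)"
proof -
  have sF: "s \<in> F" and k1: "kapp s < kapp t" and k2: "\<not> kapp s < t * NN" using assms(3) unfolding Dp_def by auto
  have sN: "s < NN" and tN: "t < NN" using assms sF by auto
  have "t \<le> s + d s" using k2 kapp_lt_iff[OF sN, of t] by simp
  moreover have "s + d s \<le> t + d t" using kapp_lt_le[OF sN tN k1] .
  ultimately show ?thesis using sF k1 by auto
qed

lemma card_le_real: "real (card {k::nat. 1 \<le> k \<and> real k < b}) \<le> max 0 b"
proof -
  define n where "n = nat \<lceil>b\<rceil>"
  have sub: "{k::nat. 1 \<le> k \<and> real k < b} \<subseteq> {1..<n}"
    unfolding n_def by (auto, linarith)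
  have "card {k::nat. 1 \<le> k \<and> real k < b} \<le> card {1..<n}" by (rule card_mono[OF _ sub]) simp
  also have "\<dots> = n - 1" by simp
  finally have c: "card {k::nat. 1 \<le> k \<and> real k < b} \<le> n - 1" .
  have "real (n - 1) \<le> max 0 b" unfolding n_def by linarith
  then show ?thesis using c by (meson of_nat_le_iff order_trans)
qed

lemma card_Dp:
  assumes F: "F \<subseteq> {..<NN}" "finite F" and t: "t \<in> F"
    and b: "\<And>u. u \<in> F \<Longrightarrow> real (d u) < b"
  shows "real (card (Dp F t)) \<le> 2 * max 0 b"
proof -
  define J where "J = {k::nat. 1 \<le> k \<and> real k < b}"
  have fJ: "finite J" unfolding J_def
    by (rule finite_subset[of _ "{..nat \<lceil>b\<rceil>}"]) (auto, linarith)
  have sub: "Dp F t \<subseteq> (\<lambda>k. t - k) ` J \<union> (\<lambda>k. t + k) ` J"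
  proof
    fix s assume s: "s \<in> Dp F t"
    note fs = Dp_facts[OF F(1) t s]
    show "s \<in> (\<lambda>k. t - k) ` J \<union> (\<lambda>k. t + k) ` J"
    proof (cases "s < t")
      case True
      have "t - s \<in> J" unfolding J_def using fs True b[of s] by auto
      moreover have "s = t - (t - s)" using True by simp
      ultimately show ?thesis by blast
    next
      case False
      then have "t < s" using fs by simp
      have "s - t \<in> J" unfolding J_def using fs \<open>t < s\<close> b[OF t] by auto
      moreover have "s = t + (s - t)" using \<open>t < s\<close> by simp
      ultimately show ?thesis by blast
    qed
  qed
  have "card (Dp F t) \<le> card ((\<lambda>k. t - k) ` J \<union> (\<lambda>k. t + k) ` J)"
    by (rule card_mono[OF _ sub]) (simp add: fJ)
  also have "\<dots> \<le> card ((\<lambda>k. t - k) ` J) + card ((\<lambda>k. t + k) ` J)" by (rule card_Un_le)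
  also have "\<dots> \<le> card J + card J" by (intro add_mono card_image_le fJ)
  finally have "real (card (Dp F t)) \<le> real (card J) + real (card J)" by linarith
  also have "\<dots> \<le> 2 * max 0 b" using card_le_real[of b] unfolding J_def by simp
  finally show ?thesis .
qed

lemma sum_card_Dp:
  assumes F: "F \<subseteq> {..<NN}" "finite F"
  shows "(\<Sum>t\<in>F. card (Dp F t)) \<le> (\<Sum>u\<in>F. d u)"
proof -
  have fD: "finite (Dp F t)" for t using F unfolding Dp_def by simp
  have "(\<Sum>t\<in>F. card (Dp F t)) = card (Sigma F (Dp F))"
    using F by (simp add: card_SigmaI fD)
  also have "\<dots> \<le> card (Sigma F (\<lambda>u. {u<..u + d u}))"
  proof (rule card_inj_on_le[where f = "\<lambda>(t, s). (min s t, max s t)"])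
    show "finite (Sigma F (\<lambda>u. {u<..u + d u}))" using F by simp
    show "(\<lambda>(t, s). (min s t, max s t)) ` Sigma F (Dp F) \<subseteq> Sigma F (\<lambda>u. {u<..u + d u})"
    proof
      fix x assume "x \<in> (\<lambda>(t, s). (min s t, max s t)) ` Sigma F (Dp F)"
      then obtain t s where ts: "t \<in> F" "s \<in> Dp F t" and x: "x = (min s t, max s t)" by auto
      note fs = Dp_facts[OF F(1) ts]
      show "x \<in> Sigma F (\<lambda>u. {u<..u + d u})"
        using fs ts unfolding x by (cases "s < t") (auto simp: min_def max_def)
    qed
    show "inj_on (\<lambda>(t, s). (min s t, max s t)) (Sigma F (Dp F))"
    proof (rule inj_onI, clarsimp)
      fix t s t' s'
      assume a: "t \<in> F" "s \<in> Dp F t" "t' \<in> F" "s' \<in> Dp F t'"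
        and e: "min s t = min s' t'" "max s t = max s' t'"
      have k: "kapp s < kapp t" "kapp s' < kapp t'" using a unfolding Dp_def by auto
      have n: "s \<noteq> t" "s' \<noteq> t'" using Dp_facts[OF F(1) a(1,2)] Dp_facts[OF F(1) a(3,4)] by auto
      from e n have "(s = s' \<and> t = t') \<or> (s = t' \<and> t = s')"
        by (auto simp: min_def max_def split: if_splits)
      then show "t = t' \<and> s = s'" using k by auto
    qed
  qed
  also have "\<dots> = (\<Sum>u\<in>F. d u)" using F by (simp add: card_SigmaI)
  finally show ?thesis .
qed

end

locale full = dew K d l for K d l +
  fixes T :: nat
  assumes l01: "\<And>t a. t \<in> {1..T} \<Longrightarrow> a \<in> {1..K} \<Longrightarrow> 0 \<le> l t a \<and> l t a \<le> 1"

sublocale full \<subseteq> ep K d using K2 by unfold_locales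

locale epo = full +
  fixes m r e :: nat
  assumes r1: "1 \<le> r" and re: "r \<le> e" and eT: "e \<le> T"
    and ep_in: "\<And>t. r \<le> t \<Longrightarrow> t \<le> e \<Longrightarrow> epoch K d t = (m, r)"
    and stay: "stay_cond K d m r e"
begin

definition NN where "NN = Suc T"
definition kap where "kap = kapp d NN"
definition FF where "FF = {s \<in> {r..e}. real (d s) < beta K m}"
definition PreF where "PreF c = {s \<in> FF. kap s < c}"
abbreviation et where "et \<equiv> eta K m"

lemma FF_sub: "FF \<subseteq> {r..e}" unfolding FF_def by auto
lemma finite_FF: "finite FF" unfolding FF_def by simp
lemma FF_NN: "FF \<subseteq> {..<NN}" unfolding FF_def NN_def using eT by auto

lemma et_pos: "0 < et" unfolding eta_def using beta_pos by simp

lemma etaf_eq: "r \<le> s \<Longrightarrow> s \<le> e \<Longrightarrow> etaf K d (s - 1) = et"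
  unfolding etaf_def eta_eff_def using ep_in[of s] r1 by (simp add: eta_def)

lemma Rcv_eq: "r \<le> s \<Longrightarrow> s \<le> e \<Longrightarrow> Rcv K d (s - 1) = PreF (s * NN)"
proof -
  assume s: "r \<le> s" "s \<le> e"
  have ep: "epoch K d (s - 1 + 1) = (m, r)" using ep_in[OF s] r1 s by simp
  have "Rcv K d (s - 1) = {u. 1 \<le> u \<and> r \<le> u \<and> u + d u \<le> s - 1 \<and> real (d u) < beta K m}"
    unfolding Rcv_def received_def using ep by simp
  also have "\<dots> = PreF (s * NN)"
  proof (intro set_eqI iffI)
    fix u assume "u \<in> {u. 1 \<le> u \<and> r \<le> u \<and> u + d u \<le> s - 1 \<and> real (d u) < beta K m}"
    then have u: "1 \<le> u" "r \<le> u" "u + d u \<le> s - 1" "real (d u) < beta K m" by auto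
    then have uF: "u \<in> FF" unfolding FF_def using s by auto
    have "u < NN" using uF FF_NN by auto
    then have "kap u < s * NN" unfolding kap_def using kapp_lt_iff[where d=d and NN=NN and u=u and v=s] u r1 s by simp
    then show "u \<in> PreF (s * NN)" unfolding PreF_def using uF by simp
  next
    fix u assume "u \<in> PreF (s * NN)"
    then have uF: "u \<in> FF" and k: "kap u < s * NN" unfolding PreF_def by auto
    have "u < NN" using uF FF_NN by auto
    then have "u + d u < s" using k kapp_lt_iff[where d=d and NN=NN and u=u and v=s] unfolding kap_def by simp
    then show "u \<in> {u. 1 \<le> u \<and> r \<le> u \<and> u + d u \<le> s - 1 \<and> real (d u) < beta K m}"
      using uF r1 unfolding FF_def by auto
  qed
  finally show ?thesis .
qed

lemma p_repr:
  assumes xs: "xs \<in> X T" and s: "r \<le> s" "s \<le> e"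
  shows "p (take (s - 1) xs) b =
     exp (- et * (\<Sum>u\<in>PreF (s * NN). lhat xs u b)) /
     (\<Sum>c\<in>{1..K}. exp (- et * (\<Sum>u\<in>PreF (s * NN). lhat xs u c)))"
proof -
  have len: "length (take (s - 1) xs) = s - 1" using xs s eT by (simp add: X_length)
  have trm: "(if c = take (s - 1) xs ! (u - 1) then l u c / p (take (u - 1) (take (s - 1) xs)) c else 0)
       = lhat xs u c" if u: "u \<in> PreF (s * NN)" for u c
  proof -
    have "u \<in> Rcv K d (s - 1)" using u Rcv_eq[OF s] by simp
    from Rcv_facts[OF this] have "1 \<le> u" "u + d u \<le> s - 1" by auto
    then have "u - 1 < s - 1" by simp
    then show ?thesis unfolding lhat_def by (simp add: min_def)
  qed
  show ?thesis
    apply (subst pdist_eq)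
    unfolding len etaf_eq[OF s] Rcv_eq[OF s]
    using trm by (simp cong: sum.cong)
qed

definition AA where "AA xs s = xs ! (s - 1)"
definition LL where "LL xs s = l s (xs ! (s - 1))"
definition PP where "PP xs s = p (take (s - 1) xs) (xs ! (s - 1))"

lemma FF_T: "s \<in> FF \<Longrightarrow> s \<in> {1..T}" using FF_sub r1 eT by force

lemma dewan_inst:
  assumes xs: "xs \<in> X T"
  shows "dewan K et FF kap (AA xs) (LL xs) (PP xs)"
proof
  show "1 \<le> K" using K1 .
  show "0 < et" using et_pos .
  show "finite FF" using finite_FF .
  show "inj_on kap FF" unfolding kap_def using kapp_inj[of d NN] FF_NN by (rule inj_on_subset)
  show "AA xs s \<in> {1..K}" if "s \<in> FF" for s
  proof -
    have "s - 1 < T" using FF_T[OF that] by auto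
    then show ?thesis unfolding AA_def by (rule X_nth[OF xs])
  qed
  then show "0 \<le> LL xs s" "LL xs s \<le> 1" if "s \<in> FF" for s
    unfolding LL_def using l01[OF FF_T[OF that]] that unfolding AA_def by auto
  show "0 < PP xs s" for s unfolding PP_def by (rule p_pos)
qed

lemma lh_eq: assumes xs: "xs \<in> X T" shows "dewan.lh (AA xs) (LL xs) (PP xs) u b = lhat xs u b"
proof -
  interpret dw: dewan K et FF kap "AA xs" "LL xs" "PP xs" by (rule dewan_inst[OF xs])
  show ?thesis unfolding dw.lh_def lhat_def AA_def LL_def PP_def by simp
qed

lemma Pre_eq: assumes xs: "xs \<in> X T" shows "dewan.Pre FF kap c = PreF c"
proof -
  interpret dw: dewan K et FF kap "AA xs" "LL xs" "PP xs" by (rule dewan_inst[OF xs])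
  show ?thesis unfolding dw.Pre_def PreF_def ..
qed

lemma dist_eq: assumes xs: "xs \<in> X T" shows "dewan.dist K et (AA xs) (LL xs) (PP xs) U b =
   exp (- et * (\<Sum>u\<in>U. lhat xs u b)) / (\<Sum>c\<in>{1..K}. exp (- et * (\<Sum>u\<in>U. lhat xs u c)))"
proof -
  interpret dw: dewan K et FF kap "AA xs" "LL xs" "PP xs" by (rule dewan_inst[OF xs])
  show ?thesis unfolding dw.dist_def dw.wgt_def dw.W_def dw.Ks_def lh_eq[OF xs] ..
qed

lemma Dp_eq: assumes xs: "xs \<in> X T" shows "dewan.Pre FF kap (kap t) - dewan.Pre FF kap (t * NN) = Dp d NN FF t"
  unfolding Pre_eq[OF xs] unfolding PreF_def Dp_def kap_def by auto

lemma dewan2_inst: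
  assumes xs: "xs \<in> X T"
  shows "dewan2 K et FF kap (AA xs) (LL xs) (PP xs) (\<lambda>s. s * NN)"
proof -
  interpret dw: dewan K et FF kap "AA xs" "LL xs" "PP xs" by (rule dewan_inst[OF xs])
  show ?thesis
  proof
    fix s assume sF: "s \<in> FF"
    have "s * NN \<le> (s + d s) * NN" by (rule mult_le_mono1) simp
    then show "s * NN \<le> kap s" unfolding kap_def kapp_def by linarith
    have s: "r \<le> s" "s \<le> e" using sF FF_sub by auto
    show "PP xs s = dw.dist (dw.Pre (s * NN)) (AA xs s)"
      unfolding dist_eq[OF xs] Pre_eq[OF xs] PP_def AA_def using p_repr[OF xs s] by simp
    have c: "real (card (Dp d NN FF s)) \<le> 2 * max 0 (beta K m)"
      by (rule card_Dp[OF FF_NN finite_FF sF]) (auto simp: FF_def)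
    have b: "0 < beta K m" by (rule beta_pos)
    have "real (card (dw.Pre (kap s) - dw.Pre (s * NN))) * (exp 1 * et) \<le> 2 * beta K m * (exp 1 * et)"
      unfolding Dp_eq[OF xs] using c b et_pos by (intro mult_right_mono) auto
    also have "\<dots> = 1/2" unfolding eta_def using b by (simp add: field_simps)
    finally show "real (card (dw.Pre (kap s) - dw.Pre (s * NN))) * (exp 1 * et) \<le> 1/2" .
  qed
qed

lemma pointwise:
  assumes xs: "xs \<in> X T" and a: "a \<in> {1..K}"
  shows "(\<Sum>t\<in>FF. l t (xs ! (t - 1))) \<le> ln (real K) / et + (\<Sum>t\<in>FF. lhat xs t a)
     + et * exp 1 / 2 * (\<Sum>t\<in>FF. (l t (xs ! (t - 1)))\<^sup>2 / p (take (t - 1) xs) (xs ! (t - 1)))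
     + et * (\<Sum>t\<in>FF. \<Sum>s\<in>Dp d NN FF t. (if xs ! (s - 1) = xs ! (t - 1) then 1 else 0) / p (take (s - 1) xs) (xs ! (s - 1)))"
proof -
  interpret dw: dewan2 K et FF kap "AA xs" "LL xs" "PP xs" "\<lambda>s. s * NN" by (rule dewan2_inst[OF xs])
  have "a \<in> dw.Ks" unfolding dw.Ks_def using a .
  from dw.main_bound[OF this] show ?thesis
    unfolding lh_eq[OF xs] Dp_eq[OF xs] unfolding AA_def LL_def PP_def .
qed

definition SS where "SS = {s \<in> {r..e}. beta K m \<le> real (d s)}"

lemma ESS: "(\<Sum>t\<in>SS. E T (\<lambda>xs. l t (xs ! (t - 1)))) \<le> real (card SS)"
proof -
  have "E T (\<lambda>xs. l t (xs ! (t - 1))) \<le> 1" if t: "t \<in> SS" for t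
  proof -
    have tT: "t \<in> {1..T}" using t r1 eT unfolding SS_def by auto
    have "E T (\<lambda>xs. l t (xs ! (t - 1))) \<le> E T (\<lambda>xs. 1)"
    proof (rule E_mono)
      fix xs assume xs: "xs \<in> X T"
      have "t - 1 < T" using tT by auto
      from X_nth[OF xs this] show "l t (xs ! (t - 1)) \<le> 1" using l01[OF tT] by blast
    qed
    then show ?thesis by (simp add: E_const)
  qed
  then have "(\<Sum>t\<in>SS. E T (\<lambda>xs. l t (xs ! (t - 1)))) \<le> (\<Sum>t\<in>SS. 1)" by (intro sum_mono) auto
  then show ?thesis by simp
qed

lemma E_rhs:
  assumes a: "a \<in> {1..K}"
  shows "E T (\<lambda>xs. ln (real K) / et + (\<Sum>t\<in>FF. lhat xs t a)
     + et * exp 1 / 2 * (\<Sum>t\<in>FF. (l t (xs ! (t - 1)))\<^sup>2 / p (take (t - 1) xs) (xs ! (t - 1)))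
     + et * (\<Sum>t\<in>FF. \<Sum>s\<in>Dp d NN FF t. (if xs ! (s - 1) = xs ! (t - 1) then 1 else 0) / p (take (s - 1) xs) (xs ! (s - 1))))
   = ln (real K) / et + (\<Sum>t\<in>FF. l t a) + et * exp 1 / 2 * (\<Sum>t\<in>FF. \<Sum>b\<in>{1..K}. (l t b)\<^sup>2)
     + et * (\<Sum>t\<in>FF. real (card (Dp d NN FF t)))"
proof -
  have fD: "finite (Dp d NN FF t)" for t unfolding Dp_def using finite_FF by simp
  have tT: "t \<in> FF \<Longrightarrow> 1 \<le> t \<and> t \<le> T" for t using FF_T by auto
  have L: "E T (\<lambda>xs. \<Sum>t\<in>FF. lhat xs t a) = (\<Sum>t\<in>FF. l t a)"
    unfolding E_sum[OF finite_FF] using E_lhat[OF _ _ a] tT by (intro sum.cong refl) auto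
  have V: "E T (\<lambda>xs. \<Sum>t\<in>FF. (l t (xs ! (t - 1)))\<^sup>2 / p (take (t - 1) xs) (xs ! (t - 1)))
      = (\<Sum>t\<in>FF. \<Sum>b\<in>{1..K}. (l t b)\<^sup>2)"
    unfolding E_sum[OF finite_FF] using E_var tT by (intro sum.cong refl) auto
  have P: "E T (\<lambda>xs. \<Sum>t\<in>FF. \<Sum>s\<in>Dp d NN FF t. (if xs ! (s - 1) = xs ! (t - 1) then 1 else 0) / p (take (s - 1) xs) (xs ! (s - 1)))
      = (\<Sum>t\<in>FF. real (card (Dp d NN FF t)))"
  proof -
    have "E T (\<lambda>xs. \<Sum>t\<in>FF. \<Sum>s\<in>Dp d NN FF t. (if xs ! (s - 1) = xs ! (t - 1) then 1 else 0) / p (take (s - 1) xs) (xs ! (s - 1)))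
      = (\<Sum>t\<in>FF. \<Sum>s\<in>Dp d NN FF t. E T (\<lambda>xs. (if xs ! (s - 1) = xs ! (t - 1) then 1 else 0) / p (take (s - 1) xs) (xs ! (s - 1))))"
      unfolding E_sum[OF finite_FF] by (intro sum.cong refl E_sum[OF fD])
    also have "\<dots> = (\<Sum>t\<in>FF. \<Sum>s\<in>Dp d NN FF t. 1)"
    proof (intro sum.cong refl)
      fix t s assume t: "t \<in> FF" and s: "s \<in> Dp d NN FF t"
      note fs = Dp_facts[OF FF_NN t s]
      show "E T (\<lambda>xs. (if xs ! (s - 1) = xs ! (t - 1) then 1 else 0) / p (take (s - 1) xs) (xs ! (s - 1))) = 1"
      proof (rule E_pair)
        show "1 \<le> s" "s \<le> T" using tT fs by auto
        show "1 \<le> t" "t \<le> T" using tT t by auto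
        show "s \<noteq> t" using fs by simp
        show "s \<notin> Rcv K d k" if "s < t" "k \<le> t - 1" for k
          using Rcv_facts[of s K d k] fs that by auto
      qed
    qed
    finally show ?thesis by simp
  qed
  show ?thesis
    by (simp only: E_add E_cmult E_const L V P)
qed

lemma epoch_bound:
  assumes a: "a \<in> {1..K}"
  shows "(\<Sum>t\<in>{r..e}. E T (\<lambda>xs. l t (xs ! (t - 1))) - l t a) \<le> 3 * sqrt (omega m)"
proof -
  define DD where "DD = (\<Sum>s\<in>FF. real (d s))"
  define sg where "sg = real (e + 1 - r)"
  have tT: "t \<in> FF \<Longrightarrow> t \<in> {1..T}" for t using FF_T by auto
  have part: "{r..e} = FF \<union> SS" "FF \<inter> SS = {}" unfolding FF_def SS_def by auto
  have EF: "(\<Sum>t\<in>FF. E T (\<lambda>xs. l t (xs ! (t - 1))))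
      \<le> ln (real K) / et + (\<Sum>t\<in>FF. l t a) + et * exp 1 / 2 * (real K * real (card FF)) + et * DD"
  proof -
    have "(\<Sum>t\<in>FF. E T (\<lambda>xs. l t (xs ! (t - 1)))) = E T (\<lambda>xs. \<Sum>t\<in>FF. l t (xs ! (t - 1)))"
      by (rule E_sum[OF finite_FF, symmetric])
    also have "\<dots> \<le> E T (\<lambda>xs. ln (real K) / et + (\<Sum>t\<in>FF. lhat xs t a)
     + et * exp 1 / 2 * (\<Sum>t\<in>FF. (l t (xs ! (t - 1)))\<^sup>2 / p (take (t - 1) xs) (xs ! (t - 1)))
     + et * (\<Sum>t\<in>FF. \<Sum>s\<in>Dp d NN FF t. (if xs ! (s - 1) = xs ! (t - 1) then 1 else 0) / p (take (s - 1) xs) (xs ! (s - 1))))"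
      by (rule E_mono) (rule pointwise[OF _ a])
    also have "\<dots> = ln (real K) / et + (\<Sum>t\<in>FF. l t a) + et * exp 1 / 2 * (\<Sum>t\<in>FF. \<Sum>b\<in>{1..K}. (l t b)\<^sup>2)
     + et * (\<Sum>t\<in>FF. real (card (Dp d NN FF t)))" by (rule E_rhs[OF a])
    also have "\<dots> \<le> ln (real K) / et + (\<Sum>t\<in>FF. l t a) + et * exp 1 / 2 * (real K * real (card FF)) + et * DD"
    proof -
      have "(\<Sum>t\<in>FF. \<Sum>b\<in>{1..K}. (l t b)\<^sup>2) \<le> (\<Sum>t\<in>FF. \<Sum>b\<in>{1..K}. 1)"
        using l01 tT by (intro sum_mono) (simp add: power_le_one)
      then have v0: "(\<Sum>t\<in>FF. \<Sum>b\<in>{1..K}. (l t b)\<^sup>2) \<le> real (card FF) * real K" by simp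
      then have v: "(\<Sum>t\<in>FF. \<Sum>b\<in>{1..K}. (l t b)\<^sup>2) \<le> real K * real (card FF)" by (metis mult.commute)
      have "(\<Sum>t\<in>FF. card (Dp d NN FF t)) \<le> (\<Sum>u\<in>FF. d u)" by (rule sum_card_Dp[OF FF_NN finite_FF])
      then have c: "(\<Sum>t\<in>FF. real (card (Dp d NN FF t))) \<le> DD" unfolding DD_def
        by (simp only: of_nat_sum[symmetric] of_nat_le_iff)
      have "et * exp 1 / 2 * (\<Sum>t\<in>FF. \<Sum>b\<in>{1..K}. (l t b)\<^sup>2) \<le> et * exp 1 / 2 * (real K * real (card FF))"
        using et_pos by (intro mult_left_mono[OF v]) simp
      moreover have "et * (\<Sum>t\<in>FF. real (card (Dp d NN FF t))) \<le> et * DD"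
        using et_pos by (intro mult_left_mono[OF c]) simp
      ultimately show ?thesis by linarith
    qed
    finally show ?thesis .
  qed
  have cF: "real (card FF) \<le> sg"
  proof -
    have "card FF \<le> card {r..e}" by (rule card_mono) (auto simp: FF_def)
    then show ?thesis unfolding sg_def by simp
  qed
  have la: "(\<Sum>t\<in>FF. l t a) \<le> (\<Sum>t\<in>{r..e}. l t a)"
  proof (rule sum_mono2)
    show "finite {r..e}" by simp
    show "FF \<subseteq> {r..e}" by (rule FF_sub)
    show "0 \<le> l t a" if "t \<in> {r..e} - FF" for t using l01[of t a] a that r1 eT by auto
  qed
  have "(\<Sum>t\<in>{r..e}. E T (\<lambda>xs. l t (xs ! (t - 1))) - l t a)
      = (\<Sum>t\<in>FF. E T (\<lambda>xs. l t (xs ! (t - 1)))) + (\<Sum>t\<in>SS. E T (\<lambda>xs. l t (xs ! (t - 1)))) - (\<Sum>t\<in>{r..e}. l t a)"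
  proof -
    have fS: "finite SS" unfolding SS_def by simp
    have "(\<Sum>t\<in>{r..e}. E T (\<lambda>xs. l t (xs ! (t - 1)))) = (\<Sum>t\<in>FF. E T (\<lambda>xs. l t (xs ! (t - 1)))) + (\<Sum>t\<in>SS. E T (\<lambda>xs. l t (xs ! (t - 1))))"
      unfolding part(1) by (rule sum.union_disjoint[OF finite_FF fS part(2)])
    then show ?thesis by (simp only: sum_subtractf)
  qed
  also have "\<dots> \<le> ln (real K) / et + et * (exp 1 * real K * sg / 2 + DD) + real (card SS)"
  proof -
    have "et * exp 1 / 2 * (real K * real (card FF)) \<le> et * exp 1 / 2 * (real K * sg)"
      using cF et_pos by (intro mult_left_mono) auto
    moreover have "et * (exp 1 * real K * sg / 2 + DD) = et * exp 1 / 2 * (real K * sg) + et * DD"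
      by (simp add: algebra_simps)
    ultimately show ?thesis using EF ESS la by linarith
  qed
  also have "\<dots> \<le> 3 * sqrt (omega m)"
  proof -
    have st: "(real (card SS))\<^sup>2 \<le> omega m"
      "(exp 1 * real K * sg / 2 + DD) * ln (real K) \<le> omega m"
    proof -
      have "max ((real (card SS))\<^sup>2) ((exp 1 * real K * sg / 2 + DD) * ln (real K)) \<le> omega m"
        using stay unfolding stay_cond_def SS_def[symmetric] FF_def[symmetric] sg_def[symmetric] DD_def[symmetric] .
      then show "(real (card SS))\<^sup>2 \<le> omega m" "(exp 1 * real K * sg / 2 + DD) * ln (real K) \<le> omega m"
        by (simp_all only: max.bounded_iff)
    qed
    have sq: "0 < sqrt (omega m)" using omega_pos by simp
    have c1: "real (card SS) \<le> sqrt (omega m)" using st(1) real_le_rsqrt by simp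
    have c2: "ln (real K) / et = sqrt (omega m)" unfolding eta_eq using lnK_pos sq by simp
    have "et * (exp 1 * real K * sg / 2 + DD) = (exp 1 * real K * sg / 2 + DD) * ln (real K) / sqrt (omega m)"
      unfolding eta_eq by simp
    also have "\<dots> \<le> omega m / sqrt (omega m)" using st(2) sq by (intro divide_right_mono) auto
    also have "\<dots> = sqrt (omega m)" using omega_pos[of m]
      by (metis less_eq_real_def real_div_sqrt)
    finally show ?thesis using c1 c2 by simp
  qed
  finally show ?thesis .
qed

end

context full
begin

lemma exp_loss_eq: "exp_loss K d l T = (\<Sum>t\<in>{1..T}. E T (\<lambda>xs. l t (xs ! (t - 1))))"
proof -
  have "exp_loss K d l T = E T (\<lambda>xs. \<Sum>i<T. l (i + 1) (xs ! i))"
    unfolding exp_loss_def E_def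
  proof (intro sum.cong)
    show "{xs. length xs = T \<and> set xs \<subseteq> {1..K}} = X T" unfolding X_def ..
    fix xs assume "xs \<in> X T"
    then have "length xs = T" by (rule X_length)
    then show "(\<Prod>i<T. pdist K d l (take i xs) (xs ! i)) * (\<Sum>i<T. l (i + 1) (xs ! i))
        = Prp [] xs * (\<Sum>i<T. l (i + 1) (xs ! i))" unfolding Prp_def by simp
  qed
  also have "\<dots> = (\<Sum>i<T. E T (\<lambda>xs. l (i + 1) (xs ! i)))" by (rule E_sum) simp
  also have "\<dots> = (\<Sum>t\<in>{1..T}. E T (\<lambda>xs. l t (xs ! (t - 1))))"
    using sum.atLeast1_atMost_eq[of "\<lambda>t. E T (\<lambda>xs. l t (xs ! (t - 1)))" T] by simp
  finally show ?thesis .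
qed

lemma epoch_group:
  assumes T1: "1 \<le> T" and a: "a \<in> {1..K}"
  shows "(\<Sum>t\<in>{1..T}. E T (\<lambda>xs. l t (xs ! (t - 1))) - l t a)
       \<le> (\<Sum>m\<le>fst (epoch K d T). 3 * sqrt (omega m))"
proof -
  define M where "M = fst (epoch K d T)"
  define g where "g t = E T (\<lambda>xs. l t (xs ! (t - 1))) - l t a" for t
  have img: "(\<lambda>t. fst (epoch K d t)) ` {1..T} \<subseteq> {..M}"
    unfolding M_def using epoch_mono by auto
  have "(\<Sum>t\<in>{1..T}. g t) = (\<Sum>m\<in>{..M}. \<Sum>t\<in>{t\<in>{1..T}. fst (epoch K d t) = m}. g t)"
    by (rule sum.group[symmetric, OF _ _ img]) auto
  also have "\<dots> \<le> (\<Sum>m\<in>{..M}. 3 * sqrt (omega m))"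
  proof (intro sum_mono)
    fix m assume "m \<in> {..M}"
    define G where "G = {t\<in>{1..T}. fst (epoch K d t) = m}"
    show "(\<Sum>t\<in>{t\<in>{1..T}. fst (epoch K d t) = m}. g t) \<le> 3 * sqrt (omega m)"
    proof (cases "G = {}")
      case True
      then have e0: "{t\<in>{1..T}. fst (epoch K d t) = m} = {}" unfolding G_def .
      show ?thesis unfolding e0 using omega_pos[of m] by simp
    next
      case False
      have fG: "finite G" unfolding G_def by simp
      define e where "e = Max G"
      have eG: "e \<in> G" unfolding e_def using fG False by simp
      obtain r where er: "epoch K d e = (m, r)" using eG unfolding G_def by (cases "epoch K d e") auto
      have e1: "1 \<le> e" "e \<le> T" using eG unfolding G_def by auto
      note inv = epoch_inv[OF e1(1) er]
      have GE: "G = {r..e}"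
      proof (intro set_eqI iffI)
        fix t assume tG: "t \<in> G"
        then have t1: "1 \<le> t" "t \<le> T" "fst (epoch K d t) = m" unfolding G_def by auto
        have "epoch K d t = epoch K d e" using epoch_same[OF t1(1) e1(1)] t1(3) er by simp
        then have "epoch K d t = (m, r)" using er by simp
        then have "r \<le> t" using epoch_inv[OF t1(1)] by blast
        moreover have "t \<le> e" unfolding e_def using fG tG by simp
        ultimately show "t \<in> {r..e}" by simp
      next
        fix t assume "t \<in> {r..e}"
        then have "epoch K d t = (m, r)" "1 \<le> t" "t \<le> T" using inv e1 by auto
        then show "t \<in> G" unfolding G_def by simp
      qed
      interpret epo K d l T m r e
        using inv e1 by unfold_locales auto
      have "(\<Sum>t\<in>G. g t) \<le> 3 * sqrt (omega m)" unfolding GE g_def by (rule epoch_bound[OF a])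
      then show ?thesis unfolding G_def .
    qed
  qed
  finally show ?thesis unfolding g_def M_def by simp
qed

end

lemma geom_sqrt2: "(\<Sum>m\<le>M. sqrt (omega m)) \<le> (2 + sqrt 2) * sqrt (omega M)"
proof (induction M)
  case 0 then show ?case by (simp add: omega_def)
next
  case (Suc M)
  have s: "sqrt (omega (Suc M)) = sqrt 2 * sqrt (omega M)"
    unfolding omega_Suc by (simp add: real_sqrt_mult)
  have "(\<Sum>m\<le>Suc M. sqrt (omega m)) \<le> (2 + sqrt 2) * sqrt (omega M) + sqrt 2 * sqrt (omega M)"
    using Suc s by simp
  also have "\<dots> = (2 + sqrt 2) * sqrt (omega (Suc M))"
    unfolding s by (simp add: algebra_simps)
  finally show ?case .
qed

lemma sqrt2_le: "sqrt 2 \<le> (3/2::real)"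
proof -
  have "sqrt 2 \<le> sqrt ((3/2)\<^sup>2)" by (intro real_sqrt_le_mono) (simp add: power2_eq_square)
  then show ?thesis by simp
qed

lemma ln2_ge: "1/2 \<le> ln (2::real)"
proof -
  have "ln (1/2::real) \<le> 1/2 - 1" by (rule ln_le_minus_one) simp
  then show ?thesis by (simp add: ln_div)
qed

lemma quad_bound:
  fixes x A b w :: real
  assumes "0 \<le> b" "0 \<le> w" "A \<le> w\<^sup>2" "x\<^sup>2 < A + b * x"
  shows "x < b + w"
proof (rule ccontr)
  assume "\<not> x < b + w"
  then have h: "w \<le> x - b" by simp
  then have "w\<^sup>2 \<le> (x - b)\<^sup>2" using assms(2) by (intro power_mono) auto
  also have "(x - b)\<^sup>2 \<le> x * (x - b)" using h assms by (simp add: power2_eq_square mult_right_mono)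
  finally have "A \<le> x * (x - b)" using assms(3) by simp
  then show False using assms(4) by (simp add: power2_eq_square algebra_simps)
qed

context ep
begin

definition fb :: "nat \<Rightarrow> real \<Rightarrow> real" where
  "fb T b = real (card (S_set d T b)) + 4 * exp 1 * b * ln (real K) + (real K * real T + D_beta d T b) / (4 * exp 1 * b)"

lemma D_beta_nn: "0 \<le> D_beta d T b" unfolding D_beta_def by (simp add: sum_nonneg)

lemma fb_nn: "0 < b \<Longrightarrow> 0 \<le> fb T b"
  unfolding fb_def using lnK_pos D_beta_nn[of T b] by (simp add: add_nonneg_nonneg)

lemma fail_bound:
  assumes ns: "\<not> stay_cond K d m r t" and rt: "1 \<le> r" "r \<le> t" "t \<le> T" and b: "0 < b"
  shows "sqrt (omega m) \<le> fb T b"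
proof -
  define x where "x = sqrt (omega m)"
  define bt where "bt = beta K m"
  define Sb where "Sb = S_set d T b"
  define Db where "Db = D_beta d T b"
  define u where "u = 4 * exp 1 * b * ln (real K)"
  define v where "v = (real K * real T + Db) / (4 * exp 1 * b)"
  define S' where "S' = {s \<in> {r..t}. bt \<le> real (d s)}"
  define P' where "P' = {s \<in> {r..t}. real (d s) < bt}"
  define D' where "D' = (\<Sum>s\<in>P'. real (d s))"
  define sg where "sg = real (t + 1 - r)"
  have f: "fb T b = real (card Sb) + u + v" unfolding fb_def Sb_def u_def v_def Db_def ..
  have x0: "0 \<le> x" unfolding x_def using less_imp_le[OF omega_pos[of m]] by simp
  have xb: "bt * ln (real K) = x / (4 * exp 1)" unfolding x_def bt_def by (rule beta_lnK)
  have xx: "x\<^sup>2 = omega m" unfolding x_def using less_imp_le[OF omega_pos[of m]] by simp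
  have Dbn: "0 \<le> Db" unfolding Db_def by (rule D_beta_nn)
  have un: "0 \<le> u" unfolding u_def using b lnK_pos by simp
  have vn: "0 \<le> v" unfolding v_def using b Dbn by simp
  have cases: "omega m < (real (card S'))\<^sup>2 \<or> omega m < (exp 1 * real K * sg / 2 + D') * ln (real K)"
    using ns unfolding stay_cond_def S'_def P'_def D'_def sg_def bt_def by auto
  then show ?thesis
  proof
    assume A: "omega m < (real (card S'))\<^sup>2"
    have xc: "x < real (card S')"
    proof -
      have "sqrt (omega m) < sqrt ((real (card S'))\<^sup>2)" using A by (rule real_sqrt_less_mono)
      then show ?thesis unfolding x_def by simp
    qed
    show ?thesis
    proof (cases "bt \<le> b")
      case True
      have "x = 4 * exp 1 * (bt * ln (real K))" using xb by simp
      also have "\<dots> \<le> 4 * exp 1 * (b * ln (real K))" using True lnK_pos by (intro mult_left_mono) auto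
      finally have "x \<le> u" unfolding u_def by simp
      then show ?thesis unfolding f x_def[symmetric] using vn by simp
    next
      case False
      have "S' \<subseteq> Sb" unfolding S'_def Sb_def S_set_def using False rt by auto
      then have "card S' \<le> card Sb" by (intro card_mono) (auto simp: Sb_def S_set_def)
      then show ?thesis unfolding f x_def[symmetric] using xc un vn by linarith
    qed
  next
    assume B: "omega m < (exp 1 * real K * sg / 2 + D') * ln (real K)"
    define P1 where "P1 = {s \<in> P'. real (d s) < b}"
    define P2 where "P2 = {s \<in> P'. b \<le> real (d s)}"
    have fP: "finite P'" unfolding P'_def by simp
    have Pu: "P' = P1 \<union> P2" "P1 \<inter> P2 = {}" unfolding P1_def P2_def by auto
    have "D' = (\<Sum>s\<in>P1. real (d s)) + (\<Sum>s\<in>P2. real (d s))"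
      unfolding D'_def Pu(1) by (rule sum.union_disjoint) (use fP Pu in auto)
    also have "(\<Sum>s\<in>P1. real (d s)) \<le> Db"
      unfolding Db_def D_beta_def
    proof (rule sum_mono2)
      show "finite ({1..T} - S_set d T b)" by simp
      show "P1 \<subseteq> {1..T} - S_set d T b" unfolding P1_def P'_def S_set_def using rt by auto
    qed auto
    also have "(\<Sum>s\<in>P2. real (d s)) \<le> (\<Sum>s\<in>P2. bt)"
      by (intro sum_mono) (auto simp: P2_def P'_def less_imp_le)
    also have "\<dots> = bt * real (card P2)" by simp
    also have "\<dots> \<le> bt * real (card Sb)"
    proof -
      have "P2 \<subseteq> Sb" unfolding P2_def P'_def Sb_def S_set_def using rt by auto
      then have "card P2 \<le> card Sb" by (intro card_mono) (auto simp: Sb_def S_set_def)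
      then show ?thesis using beta_pos[of m] unfolding bt_def by (intro mult_left_mono) auto
    qed
    finally have D'le: "D' \<le> Db + bt * real (card Sb)" by simp
    have sgT: "sg \<le> real T" unfolding sg_def using rt by simp
    define Aa where "Aa = (exp 1 * real K * real T / 2 + Db) * ln (real K)"
    have "x\<^sup>2 < (exp 1 * real K * sg / 2 + D') * ln (real K)" using B xx by simp
    also have "\<dots> \<le> (exp 1 * real K * real T / 2 + (Db + bt * real (card Sb))) * ln (real K)"
    proof -
      have "exp 1 * real K * sg / 2 \<le> exp 1 * real K * real T / 2"
        using sgT by (intro divide_right_mono mult_left_mono) auto
      then show ?thesis using D'le lnK_pos by (intro mult_right_mono add_mono) auto
    qed
    also have "\<dots> = Aa + (real (card Sb) / (4 * exp 1)) * x"
    proof -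
      have "bt * real (card Sb) * ln (real K) = real (card Sb) * (bt * ln (real K))" by simp
      also have "\<dots> = real (card Sb) / (4 * exp 1) * x" unfolding xb by simp
      finally have e1: "bt * real (card Sb) * ln (real K) = real (card Sb) / (4 * exp 1) * x" .
      show ?thesis unfolding Aa_def e1[symmetric] by (simp add: algebra_simps)
    qed
    finally have q: "x\<^sup>2 < Aa + (real (card Sb) / (4 * exp 1)) * x" .
    have nz: "4 * exp 1 * b \<noteq> 0" using b by simp
    have "u * v = ((4 * exp 1 * b) * ((real K * real T + Db) / (4 * exp 1 * b))) * ln (real K)"
      unfolding u_def v_def by (simp only: mult_ac)
    then have uv: "u * v = (real K * real T + Db) * ln (real K)" using nz by simp
    have "Aa \<le> 4 * ((real K * real T + Db) * ln (real K))"
    proof -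
      define Q where "Q = real K * real T"
      have Q0: "0 \<le> Q" unfolding Q_def by simp
      have "exp 1 * Q \<le> 3 * Q" using exp_le Q0 by (intro mult_right_mono) auto
      then have h1: "exp 1 * Q / 2 + Db \<le> 3 * Q / 2 + Db" by simp
      have h2: "3 * Q / 2 + Db \<le> 4 * (Q + Db)" using Q0 Dbn by simp
      have "exp 1 * Q / 2 + Db \<le> 4 * (Q + Db)" using h1 h2 by (rule order_trans)
      moreover have "exp 1 * real K * real T = exp 1 * Q" unfolding Q_def by (simp add: mult.assoc)
      ultimately have "exp 1 * real K * real T / 2 + Db \<le> 4 * (real K * real T + Db)"
        unfolding Q_def by simp
      then show ?thesis unfolding Aa_def using lnK_pos by (simp add: mult_right_mono)
    qed
    also have "\<dots> = 4 * (u * v)" using uv by simp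
    also have "\<dots> \<le> (u + v)\<^sup>2"
    proof -
      have "(u + v)\<^sup>2 = (u - v)\<^sup>2 + 4 * (u * v)" by (simp add: power2_eq_square algebra_simps)
      then show ?thesis by simp
    qed
    finally have Aw: "Aa \<le> (u + v)\<^sup>2" .
    have "x < real (card Sb) / (4 * exp 1) + (u + v)"
      by (rule quad_bound[OF _ _ Aw q]) (use un vn in auto)
    moreover have "real (card Sb) / (4 * exp 1) \<le> real (card Sb)"
    proof -
      have "1 \<le> 4 * exp (1::real)" using exp_ge_add_one_self[of "1::real"] by simp
      then have "real (card Sb) / (4 * exp 1) \<le> real (card Sb) / 1"
        by (intro divide_left_mono) auto
      then show ?thesis by simp
    qed
    ultimately show ?thesis unfolding f x_def[symmetric] by linarith
  qed
qed

end

context full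
begin

lemma KL_ge1: "1 \<le> real K * ln (real K)"
proof -
  have "ln 2 \<le> ln (real K)" using K2 by simp
  then have "1/2 \<le> ln (real K)" using ln2_ge by linarith
  moreover have "2 \<le> real K" using K2 by simp
  ultimately have "2 * (1/2) \<le> real K * ln (real K)" by (intro mult_mono) auto
  then show ?thesis by simp
qed

lemma const6: "6 * sqrt 2 + 6 \<le> (15::real)" using sqrt2_le by simp

lemma regret_bound:
  assumes T1: "1 \<le> T" and b: "0 < b"
  shows "exp_regret K d l T \<le> 15 * fb T b + (10 * (exp 1)\<^sup>2 * real K * ln (real K) + 5)"
proof -
  define C where "C = 10 * (exp 1)\<^sup>2 * real K * ln (real K) + 5"
  define f where "f a = (\<Sum>t = 1..T. l t a)" for a
  have fin: "finite (f ` {1..K})" "f ` {1..K} \<noteq> {}" using K1 by auto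
  obtain a where a: "a \<in> {1..K}" and fa: "Min (f ` {1..K}) = f a"
    using Min_in[OF fin] by auto
  define M where "M = fst (epoch K d T)"
  have "exp_regret K d l T = (\<Sum>t\<in>{1..T}. E T (\<lambda>xs. l t (xs ! (t - 1))) - l t a)"
    unfolding exp_regret_def exp_loss_eq fa[unfolded f_def] sum_subtractf by simp
  also have "\<dots> \<le> (\<Sum>m\<le>M. 3 * sqrt (omega m))" unfolding M_def by (rule epoch_group[OF T1 a])
  also have "\<dots> = 3 * (\<Sum>m\<le>M. sqrt (omega m))" by (simp add: sum_distrib_left)
  also have "\<dots> \<le> 3 * ((2 + sqrt 2) * sqrt (omega M))" using geom_sqrt2[of M] by simp
  finally have R: "exp_regret K d l T \<le> 3 * ((2 + sqrt 2) * sqrt (omega M))" .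
  obtain rT where eT: "epoch K d T = (M, rT)" unfolding M_def by (cases "epoch K d T") auto
  note inv = epoch_inv[OF T1 eT]
  have fbn: "0 \<le> fb T b" by (rule fb_nn[OF b])
  have Cn: "0 \<le> C" unfolding C_def using lnK_pos by simp
  show ?thesis
  proof (cases "rT = 1")
    case True
    have "epoch K d 1 = (M, 1)" using inv True T1 by auto
    then have MLe: "M = (LEAST m. stay_cond K d m 1 1)" using epoch_1 by simp
    have e2: "2 \<le> exp (1::real)" using exp_ge_add_one_self[of "1::real"] by simp
    have e3: "exp (1::real) \<le> 3" by (rule exp_le)
    have KL: "1 \<le> real K * ln (real K)" by (rule KL_ge1)
    have C40: "40 * (real K * ln (real K)) + 5 \<le> C"
    proof -
      have "2 * 2 \<le> exp (1::real) * exp 1" by (rule mult_mono[OF e2 e2]) auto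
      then have "4 \<le> (exp (1::real))\<^sup>2" by (simp add: power2_eq_square)
      then have "10 * 4 * (real K * ln (real K)) \<le> 10 * (exp 1)\<^sup>2 * (real K * ln (real K))"
        using KL by (intro mult_right_mono) auto
      then show ?thesis unfolding C_def by (simp add: mult.assoc)
    qed
    have "3 * ((2 + sqrt 2) * sqrt (omega M)) \<le> C"
    proof (cases "M = 0")
      case True
      then have "3 * ((2 + sqrt 2) * sqrt (omega M)) = 3 * (2 + sqrt 2)" by (simp add: omega_def)
      also have "\<dots> \<le> 45" using sqrt2_le by simp
      finally show ?thesis using C40 KL by linarith
    next
      case False
      then obtain M0 where M0: "M = Suc M0" by (cases M) auto
      have "\<not> stay_cond K d M0 1 1" using not_less_Least[of M0 "\<lambda>m. stay_cond K d m 1 1"] MLe M0 by simp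
      then have ns: "\<not> (exp 1 * real K * ln (real K) / 2 + sqrt (omega M0) / (4 * exp 1) \<le> omega M0)"
        using single_stay by blast
      define x where "x = sqrt (omega M0)"
      define A where "A = exp 1 * real K * ln (real K) / 2"
      have x1: "1 \<le> x" unfolding x_def using omega_ge1 by simp
      have xx: "x * x = omega M0" unfolding x_def using less_imp_le[OF omega_pos] by simp
      have A0: "0 \<le> A" unfolding A_def using lnK_pos by simp
      have q: "x * x < A + x / (4 * exp 1)" using ns xx unfolding x_def[symmetric] A_def by simp
      have xA: "x < A + 1"
      proof (rule ccontr)
        assume "\<not> x < A + 1"
        then have h: "A + 1 \<le> x" by simp
        have "x * (A + 1) \<le> x * x" using h x1 by (intro mult_left_mono) auto
        moreover have "A \<le> x * A" using x1 A0 by (simp add: mult_le_cancel_right1)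
        moreover have "x / (4 * exp 1) \<le> x" using x1 e2 by (simp add: divide_le_eq)
        ultimately show False using q by (simp add: algebra_simps)
      qed
      have "sqrt (omega M) = sqrt 2 * x" unfolding M0 omega_Suc x_def by (simp add: real_sqrt_mult)
      then have "3 * ((2 + sqrt 2) * sqrt (omega M)) = (6 * sqrt 2 + 6) * x" by (simp add: algebra_simps)
      also have "\<dots> \<le> 15 * x" using const6 x1 by (intro mult_right_mono) auto
      also have "\<dots> \<le> 15 * (A + 1)" using xA by simp
      also have "\<dots> \<le> 15 * (3 / 2 * (real K * ln (real K)) + 1)"
      proof -
        have "exp 1 * (real K * ln (real K)) \<le> 3 * (real K * ln (real K))"
          using e3 KL by (intro mult_right_mono) auto
        then have "A \<le> 3 / 2 * (real K * ln (real K))" unfolding A_def by (simp add: mult.assoc)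
        then show ?thesis by simp
      qed
      also have "\<dots> \<le> C" using C40 KL by simp
      finally show ?thesis .
    qed
    then show ?thesis using R fbn unfolding C_def by linarith
  next
    case False
    then have rT2: "2 \<le> rT" using inv by simp
    define t0 where "t0 = rT - 1"
    have t01: "1 \<le> t0" "Suc t0 = rT" unfolding t0_def using rT2 by auto
    obtain m' r' where e0: "epoch K d t0 = (m', r')" by (cases "epoch K d t0")
    note inv0 = epoch_inv[OF t01(1) e0]
    have eR: "epoch K d (Suc t0) = (M, rT)" using inv t01 by simp
    have "epoch K d (Suc t0) \<noteq> epoch K d t0" using eR e0 inv0 t01 by auto
    then have st: "M \<le> Suc m'" "\<not> stay_cond K d m' r' (Suc t0)"
      using epoch_step[OF t01(1)] eR e0 by auto
    have fbd: "sqrt (omega m') \<le> fb T b"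
      by (rule fail_bound[OF st(2)]) (use inv0 t01 inv b in auto)
    have "omega M \<le> omega (Suc m')" unfolding omega_def using st(1) by (intro power_increasing) auto
    then have "sqrt (omega M) \<le> sqrt (omega (Suc m'))" by simp
    also have "\<dots> = sqrt 2 * sqrt (omega m')" unfolding omega_Suc by (simp add: real_sqrt_mult)
    also have "\<dots> \<le> sqrt 2 * fb T b" using fbd by (intro mult_left_mono) auto
    finally have "sqrt (omega M) \<le> sqrt 2 * fb T b" .
    then have "3 * ((2 + sqrt 2) * sqrt (omega M)) \<le> 3 * ((2 + sqrt 2) * (sqrt 2 * fb T b))"
      by (intro mult_left_mono) auto
    also have "\<dots> = (6 * sqrt 2 + 6) * fb T b" by (simp add: algebra_simps)
    also have "\<dots> \<le> 15 * fb T b" using const6 fbn by (intro mult_right_mono) auto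
    finally show ?thesis using R Cn[unfolded C_def] by linarith
  qed
qed

end

theorem theorem6:
  fixes K T :: nat and d :: "nat \<Rightarrow> nat" and l :: "nat \<Rightarrow> nat \<Rightarrow> real"
  assumes "K \<ge> 2" and "T \<ge> 1"
    and "\<And>t a. t \<in> {1..T} \<Longrightarrow> a \<in> {1..K} \<Longrightarrow> 0 \<le> l t a \<and> l t a \<le> 1"
  shows "exp_regret K d l T
    \<le> 15 * (INF \<beta>\<in>{0<..}. real (card (S_set d T \<beta>)) + 4 * exp 1 * \<beta> * ln (real K)
                 + (real K * real T + D_beta d T \<beta>) / (4 * exp 1 * \<beta>))
      + 10 * (exp 1)^2 * real K * ln (real K) + 5"
proof -
  interpret full K d l T using assms by unfold_locales auto
  define C where "C = 10 * (exp 1)^2 * real K * ln (real K) + 5"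
  have "(exp_regret K d l T - C) / 15 \<le> (INF \<beta>\<in>{0<..}. fb T \<beta>)"
  proof (rule cINF_greatest)
    show "{0<..} \<noteq> ({} :: real set)" by auto
    fix b :: real assume "b \<in> {0<..}"
    then have "exp_regret K d l T \<le> 15 * fb T b + C" unfolding C_def using regret_bound[OF assms(2)] by simp
    then show "(exp_regret K d l T - C) / 15 \<le> fb T b" by simp
  qed
  then show ?thesis unfolding fb_def C_def by simp
qed

end
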